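(* Let $\alpha>2$ and $\rho\in(0,1)$, and let $\mathbf{R}=\begin{pmatrix}1&\rho\\ \rho&1\end{pmatrix}$. Let $\mathbf{h}_1,\mathbf{h}_2\in\mathbb{C}^2$ be independent standard circularly-symmetric complex Gaussian random vectors (mean zero, $\mathbb{E}\{\mathbf{h}_j\mathbf{h}_j^{\rm H}\}=\mathbf{I}_2$, $\mathbb{E}\{\mathbf{h}_j\mathbf{h}_j^{\rm T}\}=\mathbf{0}$), set $\tilde{\mathbf{h}}_j=\mathbf{R}^{1/2}\mathbf{h}_j$, and let ${\rm g}=\left|\tilde{\mathbf{h}}_1^{\rm H}\tilde{\mathbf{h}}_2\right|^2/\|\tilde{\mathbf{h}}_2\|^2$. Then $$\mathbb{E}\{{\rm g}^{2/\alpha}\}=\frac{1-\rho^2}{2\rho}\left[\mathcal{G}(1+\rho,\alpha)-\mathcal{G}(1-\rho,\alpha)\right],$$ where for $0<\eta<2$, $$\mathcal{G}(\eta,\alpha)=\frac{\eta^{2/\alpha+1}}{4}\left\{\Gamma\left(\frac{2}{\alpha}+1\right)\left[\frac{\eta}{2-\eta}+\frac{\alpha}{\alpha+2}\,{}_2F_1\left(1,\frac{2}{\alpha}+1;\frac{2}{\alpha}+2;\frac{\eta}{2}\right)\right]-\frac{\alpha\eta}{4(\alpha+1)}\Gamma\left(\frac{2}{\alpha}+2\right){}_2F_1\left(1,\frac{2}{\alpha}+2;\frac{2}{\alpha}+3;\frac{\eta}{2}\right)\right\}.$$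
   Context: $\mathbf{R}^{1/2}$ is the positive semidefinite square root of $\mathbf{R}$; $\Gamma$ is the Gamma function and ${}_2F_1$ the Gauss hypergeometric function. *)

theory Defs
  imports "HOL-Probability.Probability"
begin

definition hyp2f1 :: "real \<Rightarrow> real \<Rightarrow> real \<Rightarrow> real \<Rightarrow> real" where
  "hyp2f1 a b c z = (\<Sum>n. pochhammer a n * pochhammer b n / (pochhammer c n * fact n) * z ^ n)"

definition psd_sqrt :: "real^'n^'n \<Rightarrow> real^'n^'n" where
  "psd_sqrt A = (THE S. transpose S = S \<and> (\<forall>x. 0 \<le> x \<bullet> (S *v x)) \<and> S ** S = A)"

definition cmat :: "real^'n^'m \<Rightarrow> complex^'n^'m" where
  "cmat S = (\<chi> i j. complex_of_real (S $ i $ j))"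

definition Rmat :: "real \<Rightarrow> real^2^2" where
  "Rmat \<rho> = (\<chi> i j. if i = j then 1 else \<rho>)"

definition herm_inner :: "complex^'n \<Rightarrow> complex^'n \<Rightarrow> complex" where
  "herm_inner x y = (\<Sum>i\<in>UNIV. cnj (x $ i) * y $ i)"

definition G_fun :: "real \<Rightarrow> real \<Rightarrow> real" where
  "G_fun \<eta> \<alpha> = \<eta> powr (2/\<alpha> + 1) / 4 *
     (Gamma (2/\<alpha> + 1) * (\<eta> / (2 - \<eta>) + \<alpha> / (\<alpha> + 2) * hyp2f1 1 (2/\<alpha> + 1) (2/\<alpha> + 2) (\<eta>/2))
      - \<alpha> * \<eta> / (4 * (\<alpha> + 1)) * Gamma (2/\<alpha> + 2) * hyp2f1 1 (2/\<alpha> + 2) (2/\<alpha> + 3) (\<eta>/2))"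

text \<open>Real coordinates of the pair (h1,h2) of random vectors in C^2:
  index (j, i, b): j = True selects h1, False selects h2; i is the entry; b = True real part, False imaginary part.\<close>
definition coord :: "('a \<Rightarrow> complex^2) \<Rightarrow> ('a \<Rightarrow> complex^2) \<Rightarrow> bool \<times> 2 \<times> bool \<Rightarrow> 'a \<Rightarrow> real" where
  "coord h1 h2 = (\<lambda>(j, i, b) \<omega>. (if b then Re else Im) ((if j then h1 \<omega> else h2 \<omega>) $ i))"

end

theory Submission
  imports Defs
begin


definition gd :: "real \<Rightarrow> real" where "gd x = exp (-(x\<^sup>2)) / sqrt pi"

lemma gd_nonneg[simp]: "0 \<le> gd x" by (simp add: gd_def)
lemma gd_meas[measurable]: "gd \<in> borel_measurable borel" unfolding gd_def by measurable

lemma shear1: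
  fixes G :: "real \<times> real \<Rightarrow> ennreal"
  assumes [measurable]: "G \<in> borel_measurable borel"
  shows "(\<integral>\<^sup>+x. \<integral>\<^sup>+y. G (x + a*y, y) \<partial>lborel \<partial>lborel) = (\<integral>\<^sup>+x. \<integral>\<^sup>+y. G (x, y) \<partial>lborel \<partial>lborel)"
proof -
  have "(\<integral>\<^sup>+x. \<integral>\<^sup>+y. G (x + a*y, y) \<partial>lborel \<partial>lborel) = (\<integral>\<^sup>+y. \<integral>\<^sup>+x. G (x + a*y, y) \<partial>lborel \<partial>lborel)"
    by (rule lborel_pair.Fubini'[symmetric]) measurable
  also have "\<dots> = (\<integral>\<^sup>+y. \<integral>\<^sup>+x. G (x, y) \<partial>lborel \<partial>lborel)"
  proof (rule nn_integral_cong)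
    fix y
    show "(\<integral>\<^sup>+x. G (x + a*y, y) \<partial>lborel) = (\<integral>\<^sup>+x. G (x, y) \<partial>lborel)"
      using nn_integral_real_affine[where f="\<lambda>x. G (x, y)" and c=1 and t="a*y"]
      by (simp add: add.commute)
  qed
  also have "\<dots> = (\<integral>\<^sup>+x. \<integral>\<^sup>+y. G (x, y) \<partial>lborel \<partial>lborel)"
    by (rule lborel_pair.Fubini') measurable
  finally show ?thesis .
qed

lemma shear2:
  fixes G :: "real \<times> real \<Rightarrow> ennreal"
  assumes [measurable]: "G \<in> borel_measurable borel"
  shows "(\<integral>\<^sup>+x. \<integral>\<^sup>+y. G (x, y + e*x) \<partial>lborel \<partial>lborel) = (\<integral>\<^sup>+x. \<integral>\<^sup>+y. G (x, y) \<partial>lborel \<partial>lborel)"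
proof (rule nn_integral_cong)
  fix x
  show "(\<integral>\<^sup>+y. G (x, y + e*x) \<partial>lborel) = (\<integral>\<^sup>+y. G (x, y) \<partial>lborel)"
    using nn_integral_real_affine[where f="\<lambda>y. G (x, y)" and c=1 and t="e*x"]
    by (simp add: add.commute)
qed

lemma refl2:
  fixes G :: "real \<times> real \<Rightarrow> ennreal"
  assumes [measurable]: "G \<in> borel_measurable borel"
  shows "(\<integral>\<^sup>+x. \<integral>\<^sup>+y. G (-x, -y) \<partial>lborel \<partial>lborel) = (\<integral>\<^sup>+x. \<integral>\<^sup>+y. G (x, y) \<partial>lborel \<partial>lborel)"
proof -
  have "(\<integral>\<^sup>+x. \<integral>\<^sup>+y. G (-x, -y) \<partial>lborel \<partial>lborel) = (\<integral>\<^sup>+x. \<integral>\<^sup>+y. G (-x, y) \<partial>lborel \<partial>lborel)"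
  proof (rule nn_integral_cong)
    fix x show "(\<integral>\<^sup>+y. G (-x, -y) \<partial>lborel) = (\<integral>\<^sup>+y. G (-x, y) \<partial>lborel)"
      using nn_integral_real_affine[where f="\<lambda>y. G (-x, y)" and c="-1" and t=0] by simp
  qed
  also have "\<dots> = (\<integral>\<^sup>+x. \<integral>\<^sup>+y. G (x, y) \<partial>lborel \<partial>lborel)"
    using nn_integral_real_affine[where f="\<lambda>x. \<integral>\<^sup>+y. G (x, y) \<partial>lborel" and c="-1" and t=0]
    by simp
  finally show ?thesis .
qed

lemma rot2:
  fixes G :: "real \<times> real \<Rightarrow> ennreal"
  assumes [measurable]: "G \<in> borel_measurable borel" and cd: "c\<^sup>2 + d\<^sup>2 = 1"
  shows "(\<integral>\<^sup>+x. \<integral>\<^sup>+y. G (c*x + d*y, -d*x + c*y) \<partial>lborel \<partial>lborel) = (\<integral>\<^sup>+x. \<integral>\<^sup>+y. G (x, y) \<partial>lborel \<partial>lborel)"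
proof (cases "c = -1")
  case True
  then have "d = 0" using cd by (simp add: power2_eq_square)
  then show ?thesis using True refl2[OF assms(1)] by simp
next
  case False
  then have c1: "1 + c \<noteq> 0" by linarith
  define t where "t = d / (1 + c)"
  define e where "e = - d"
  have te: "1 + t*e = c" using c1 cd unfolding t_def e_def
    by (simp add: field_simps power2_eq_square)
  have td: "t*(2 + e*t) = d"
  proof -
    have "2 + e*t = 1 + c" using te by (simp add: mult.commute)
    then have "t*(2 + e*t) = t*(1+c)" by simp
    also have "\<dots> = d" using c1 unfolding t_def by simp
    finally show ?thesis .
  qed
  define G1 where "G1 = (\<lambda>p. G (fst p + t * snd p, snd p))"
  define G2 where "G2 = (\<lambda>p. G1 (fst p, snd p + e * fst p))"
  have Gp[measurable]: "G \<in> borel_measurable (borel \<Otimes>\<^sub>M borel)" using assms(1) by (simp add: borel_prod)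
  have "G1 \<in> borel_measurable (borel \<Otimes>\<^sub>M borel)" unfolding G1_def by measurable
  then have G1m[measurable]: "G1 \<in> borel_measurable borel" by (simp add: borel_prod)
  have "G2 \<in> borel_measurable (borel \<Otimes>\<^sub>M borel)" unfolding G2_def by measurable
  then have [measurable]: "G2 \<in> borel_measurable borel" by (simp add: borel_prod)
  have eq: "G (c*x + d*y, -d*x + c*y) = G2 (x + t*y, y)" for x y
  proof -
    have 1: "c*x + d*y = (x + t*y) + t*(y + e*(x + t*y))"
      by (subst te[symmetric], subst td[symmetric]) (simp add: algebra_simps)
    have 2: "-d*x + c*y = y + e*(x + t*y)"
      by (subst te[symmetric]) (simp add: e_def algebra_simps)
    show ?thesis unfolding G2_def G1_def 1 2 by simp
  qed
  have "(\<integral>\<^sup>+x. \<integral>\<^sup>+y. G (c*x + d*y, -d*x + c*y) \<partial>lborel \<partial>lborel) = (\<integral>\<^sup>+x. \<integral>\<^sup>+y. G2 (x + t*y, y) \<partial>lborel \<partial>lborel)"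
    by (simp only: eq)
  also have "\<dots> = (\<integral>\<^sup>+x. \<integral>\<^sup>+y. G2 (x, y) \<partial>lborel \<partial>lborel)" by (rule shear1) measurable
  also have "\<dots> = (\<integral>\<^sup>+x. \<integral>\<^sup>+y. G1 (x, y) \<partial>lborel \<partial>lborel)" unfolding G2_def by (simp add: shear2[OF G1m])
  also have "\<dots> = (\<integral>\<^sup>+x. \<integral>\<^sup>+y. G (x, y) \<partial>lborel \<partial>lborel)" unfolding G1_def by (simp add: shear1)
  finally show ?thesis .
qed

lemma gd_mult: "gd a * gd b = exp (-(a\<^sup>2 + b\<^sup>2)) / pi"
proof -
  have "gd a * gd b = exp (-(a\<^sup>2)) * exp (-(b\<^sup>2)) / (sqrt pi * sqrt pi)" by (simp add: gd_def)
  also have "exp (-(a\<^sup>2)) * exp (-(b\<^sup>2)) = exp (-(a\<^sup>2 + b\<^sup>2))" by (simp add: exp_add[symmetric])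
  also have "sqrt pi * sqrt pi = pi" by simp
  finally show ?thesis .
qed

lemma gd_rot: "c\<^sup>2 + d\<^sup>2 = 1 \<Longrightarrow> gd (c*x + d*y) * gd (-d*x + c*y) = gd x * gd y"
proof -
  assume cd: "c\<^sup>2 + d\<^sup>2 = 1"
  have "(c*x + d*y)\<^sup>2 + (-d*x + c*y)\<^sup>2 = (c\<^sup>2 + d\<^sup>2) * (x\<^sup>2 + y\<^sup>2)" by (simp add: power2_eq_square algebra_simps)
  then have e: "(c*x + d*y)\<^sup>2 + (-d*x + c*y)\<^sup>2 = x\<^sup>2 + y\<^sup>2" using cd by simp
  show ?thesis by (simp only: gd_mult e)
qed

lemma rotg:
  fixes F :: "real \<times> real \<Rightarrow> ennreal"
  assumes [measurable]: "F \<in> borel_measurable borel" and cd: "c\<^sup>2 + d\<^sup>2 = 1"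
  shows "(\<integral>\<^sup>+x. \<integral>\<^sup>+y. ennreal (gd x * gd y) * F (c*x + d*y, -d*x + c*y) \<partial>lborel \<partial>lborel)
       = (\<integral>\<^sup>+x. \<integral>\<^sup>+y. ennreal (gd x * gd y) * F (x, y) \<partial>lborel \<partial>lborel)"
proof -
  define G where "G = (\<lambda>p. ennreal (gd (fst p) * gd (snd p)) * F p)"
  have Fp[measurable]: "F \<in> borel_measurable (borel \<Otimes>\<^sub>M borel)" using assms(1) by (simp add: borel_prod)
  have "G \<in> borel_measurable (borel \<Otimes>\<^sub>M borel)" unfolding G_def by measurable
  then have Gm: "G \<in> borel_measurable borel" by (simp add: borel_prod)
  have "(\<integral>\<^sup>+x. \<integral>\<^sup>+y. ennreal (gd x * gd y) * F (c*x + d*y, -d*x + c*y) \<partial>lborel \<partial>lborel)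
      = (\<integral>\<^sup>+x. \<integral>\<^sup>+y. G (c*x + d*y, -d*x + c*y) \<partial>lborel \<partial>lborel)"
    unfolding G_def by (simp only: fst_conv snd_conv gd_rot[OF cd])
  also have "\<dots> = (\<integral>\<^sup>+x. \<integral>\<^sup>+y. G (x, y) \<partial>lborel \<partial>lborel)" by (rule rot2[OF Gm cd])
  finally show ?thesis unfolding G_def by simp
qed

lemma SUP_ind_lemma:
  fixes f :: "real \<Rightarrow> ennreal" and b :: "nat \<Rightarrow> real"
  assumes [measurable]: "f \<in> borel_measurable borel" and mb: "mono b" and ub: "\<And>x. \<exists>n. x \<le> b n"
  shows "(\<integral>\<^sup>+x. f x * indicator {0..} x \<partial>lborel) = (SUP n. \<integral>\<^sup>+x. f x * indicator {0..b n} x \<partial>lborel)"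
proof -
  have inc: "incseq (\<lambda>n x. f x * indicator {0..b n} x)"
  proof (rule incseq_SucI, rule le_funI)
    fix n x
    have "b n \<le> b (Suc n)" using mb by (simp add: monoD)
    then show "f x * indicator {0..b n} x \<le> f x * indicator {0..b (Suc n)} x"
      by (intro mult_left_mono) (auto simp: indicator_def)
  qed
  have pt: "(SUP n. f x * indicator {0..b n} x) = f x * indicator {0..} x" for x
  proof (cases "0 \<le> x")
    case True
    obtain n where n: "x \<le> b n" using ub by blast
    show ?thesis
    proof (rule antisym)
      show "(SUP n. f x * indicator {0..b n} x) \<le> f x * indicator {0..} x"
        by (rule SUP_least) (intro mult_left_mono, auto split: split_indicator)
      have "f x * indicator {0..} x = f x * indicator {0..b n} x" using True n by (simp split: split_indicator)
      also have "\<dots> \<le> (SUP n. f x * indicator {0..b n} x)" by (rule SUP_upper) (rule UNIV_I)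
      finally show "f x * indicator {0..} x \<le> (SUP n. f x * indicator {0..b n} x)" .
    qed
  next
    case False then show ?thesis by (simp split: split_indicator)
  qed
  have "(\<integral>\<^sup>+x. f x * indicator {0..} x \<partial>lborel) = (\<integral>\<^sup>+x. (SUP n. f x * indicator {0..b n} x) \<partial>lborel)"
    by (intro nn_integral_cong) (rule pt[symmetric])
  also have "\<dots> = (SUP n. \<integral>\<^sup>+x. f x * indicator {0..b n} x \<partial>lborel)"
    by (rule nn_integral_monotone_convergence_SUP[OF inc]) measurable
  finally show ?thesis .
qed


lemma half_sub:
  fixes Q :: "real \<Rightarrow> ennreal"
  assumes [measurable]: "Q \<in> borel_measurable borel" and k: "k > 0"
  shows "(\<integral>\<^sup>+x. Q (k * x\<^sup>2) * ennreal (2*k*x) * indicator {0..} x \<partial>lborel) = (\<integral>\<^sup>+t. Q t * indicator {0..} t \<partial>lborel)"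
proof -
  define b where "b = (\<lambda>n::nat. real n + 1)"
  have mb: "mono b" unfolding b_def by (simp add: mono_def)
  have ub: "\<exists>n. x \<le> b n" for x
  proof -
    obtain n where "x \<le> real n" using real_arch_simple by blast
    then show ?thesis unfolding b_def by (intro exI[of _ n]) simp
  qed
  have mb2: "mono (\<lambda>n. k * (b n)\<^sup>2)" unfolding b_def mono_def using k
    by (auto intro!: mult_left_mono power_mono)
  have ub2: "\<exists>n. x \<le> k * (b n)\<^sup>2" for x
  proof -
    obtain n where n: "x / k \<le> b n" "1 \<le> b n" using ub[of "max (x/k) 1"] by auto
    have "b n \<le> (b n)\<^sup>2" using n(2) by (simp add: power2_eq_square)
    then have "x / k \<le> (b n)\<^sup>2" using n(1) by linarith
    then show ?thesis using k by (intro exI[of _ n]) (simp add: field_simps)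
  qed
  have step: "(\<integral>\<^sup>+x. Q (k * x\<^sup>2) * ennreal (2*k*x) * indicator {0..b n} x \<partial>lborel)
      = (\<integral>\<^sup>+t. Q t * indicator {0..k * (b n)\<^sup>2} t \<partial>lborel)" for n
  proof -
    have "(\<integral>\<^sup>+t. Q t * indicator {(\<lambda>x. k*x\<^sup>2) 0..(\<lambda>x. k*x\<^sup>2) (b n)} t \<partial>lborel)
        = (\<integral>\<^sup>+x. Q ((\<lambda>x. k*x\<^sup>2) x) * ennreal ((\<lambda>x. 2*k*x) x) * indicator {0..b n} x \<partial>lborel)"
      by (rule nn_integral_substitution_aux)
         (use k in \<open>auto intro!: derivative_eq_intros continuous_intros simp: b_def\<close>)
    then show ?thesis by simp
  qed
  have "(\<integral>\<^sup>+x. Q (k * x\<^sup>2) * ennreal (2*k*x) * indicator {0..} x \<partial>lborel)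
      = (SUP n. \<integral>\<^sup>+x. Q (k * x\<^sup>2) * ennreal (2*k*x) * indicator {0..b n} x \<partial>lborel)"
    by (rule SUP_ind_lemma[OF _ mb ub]) measurable
  also have "\<dots> = (SUP n. \<integral>\<^sup>+t. Q t * indicator {0..k * (b n)\<^sup>2} t \<partial>lborel)"
    by (simp only: step)
  also have "\<dots> = (\<integral>\<^sup>+t. Q t * indicator {0..} t \<partial>lborel)"
    by (rule SUP_ind_lemma[OF _ mb2 ub2, symmetric]) measurable
  finally show ?thesis .
qed

lemma sub_sq:
  fixes Q :: "real \<Rightarrow> ennreal"
  assumes [measurable]: "Q \<in> borel_measurable borel" and k: "k > 0"
  shows "(\<integral>\<^sup>+x. ennreal \<bar>x\<bar> * Q (k * x\<^sup>2) \<partial>lborel) = ennreal (1/k) * (\<integral>\<^sup>+t. Q t * indicator {0..} t \<partial>lborel)"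
proof -
  define P where "P = (\<integral>\<^sup>+x. ennreal x * Q (k * x\<^sup>2) * indicator {0..} x \<partial>lborel)"
  have split: "ennreal \<bar>x\<bar> * Q (k * x\<^sup>2) = ennreal \<bar>x\<bar> * Q (k * x\<^sup>2) * indicator {0..} x + ennreal \<bar>x\<bar> * Q (k * x\<^sup>2) * indicator {..<0} x" for x
    by (auto simp: indicator_def)
  have "(\<integral>\<^sup>+x. ennreal \<bar>x\<bar> * Q (k * x\<^sup>2) \<partial>lborel) =
     (\<integral>\<^sup>+x. ennreal \<bar>x\<bar> * Q (k * x\<^sup>2) * indicator {0..} x \<partial>lborel) + (\<integral>\<^sup>+x. ennreal \<bar>x\<bar> * Q (k * x\<^sup>2) * indicator {..<0} x \<partial>lborel)"
    by (subst split) (rule nn_integral_add; measurable)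
  also have "(\<integral>\<^sup>+x. ennreal \<bar>x\<bar> * Q (k * x\<^sup>2) * indicator {0..} x \<partial>lborel) = P"
    unfolding P_def by (intro nn_integral_cong) (auto simp: indicator_def)
  also have "(\<integral>\<^sup>+x. ennreal \<bar>x\<bar> * Q (k * x\<^sup>2) * indicator {..<0} x \<partial>lborel) =
      (\<integral>\<^sup>+x. ennreal \<bar>-x\<bar> * Q (k * (-x)\<^sup>2) * indicator {..<0} (-x) \<partial>lborel)"
    using nn_integral_real_affine[where f="\<lambda>x. ennreal \<bar>x\<bar> * Q (k * x\<^sup>2) * indicator {..<0} x" and c="-1" and t=0]
    by simp
  also have "\<dots> = P"
    unfolding P_def by (intro nn_integral_cong) (auto simp: indicator_def)
  finally have 1: "(\<integral>\<^sup>+x. ennreal \<bar>x\<bar> * Q (k * x\<^sup>2) \<partial>lborel) = 2 * P" by (simp add: mult_2)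
  have "(\<integral>\<^sup>+t. Q t * indicator {0..} t \<partial>lborel) = (\<integral>\<^sup>+x. Q (k * x\<^sup>2) * ennreal (2*k*x) * indicator {0..} x \<partial>lborel)"
    by (rule half_sub[symmetric, OF assms])
  also have "\<dots> = (\<integral>\<^sup>+x. ennreal (2*k) * (ennreal x * Q (k * x\<^sup>2) * indicator {0..} x) \<partial>lborel)"
    using k by (intro nn_integral_cong) (auto simp: indicator_def ennreal_mult' mult_ac)
  also have "\<dots> = ennreal (2*k) * P" unfolding P_def by (rule nn_integral_cmult) measurable
  finally have 2: "(\<integral>\<^sup>+t. Q t * indicator {0..} t \<partial>lborel) = ennreal (2*k) * P" .
  have "ennreal (1/k) * (\<integral>\<^sup>+t. Q t * indicator {0..} t \<partial>lborel) = ennreal (1/k) * ennreal (2*k) * P"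
    by (simp add: 2 mult.assoc)
  also have "ennreal (1/k) * ennreal (2*k) = 2" using k by (simp add: ennreal_mult[symmetric])
  finally show ?thesis using 1 by simp
qed

lemma gd_normal: "normal_density 0 (sqrt (1/2)) = gd"
  by (rule ext) (simp add: normal_density_def gd_def)

lemma nn_integral_gd: "(\<integral>\<^sup>+x. ennreal (gd x) \<partial>lborel) = 1"
proof -
  have "(\<integral>\<^sup>+x. ennreal (gd x) \<partial>lborel) = ennreal (\<integral>x. gd x \<partial>lborel)"
    by (rule nn_integral_eq_integral) (auto simp: gd_normal[symmetric])
  also have "(\<integral>x. gd x \<partial>lborel) = 1" by (simp add: gd_normal[symmetric])
  finally show ?thesis by simp
qed

lemma nn_integral_exp_neg: "(\<integral>\<^sup>+t. ennreal (exp (-t)) * indicator {0..} t \<partial>lborel) = 1"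
proof -
  have l0: "((\<lambda>t. exp (- t)) \<longlongrightarrow> (0::real)) at_top"
    by (rule filterlim_compose[OF exp_at_bot filterlim_uminus_at_bot_at_top])
  have l1: "((\<lambda>t. - exp (- t)) \<longlongrightarrow> (0::real)) at_top"
    using tendsto_minus[OF l0] by simp
  have "(\<integral>\<^sup>+t. ennreal (exp (-t)) * indicator {0..} t \<partial>lborel) = ennreal (0 - (- exp (- 0::real)))"
    by (rule nn_integral_FTC_atLeast[where F="\<lambda>t. - exp (-t)"])
       (auto intro!: derivative_eq_intros l1)
  then show ?thesis by simp
qed

lemma polar_gen:
  fixes H :: "real \<Rightarrow> ennreal"
  assumes [measurable]: "H \<in> borel_measurable borel"
  shows "(\<integral>\<^sup>+x. \<integral>\<^sup>+y. ennreal (gd x * gd y) * H (x\<^sup>2 + y\<^sup>2) \<partial>lborel \<partial>lborel)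
    = (\<integral>\<^sup>+u. ennreal (1 / (pi * (1 + u\<^sup>2))) \<partial>lborel) * (\<integral>\<^sup>+t. ennreal (exp (-t)) * H t * indicator {0..} t \<partial>lborel)"
proof -
  define Q where "Q = (\<lambda>t. ennreal (exp (-t)) * H t)"
  have Qm[measurable]: "Q \<in> borel_measurable borel" unfolding Q_def by measurable
  define J where "J = (\<integral>\<^sup>+t. Q t * indicator {0..} t \<partial>lborel)"
  have inner: "(\<integral>\<^sup>+y. ennreal (gd x * gd y) * H (x\<^sup>2 + y\<^sup>2) \<partial>lborel)
      = (\<integral>\<^sup>+u. ennreal (1/pi) * (ennreal \<bar>x\<bar> * Q ((1 + u\<^sup>2) * x\<^sup>2)) \<partial>lborel)" if x: "x \<noteq> 0" for x
  proof -
    have "(\<integral>\<^sup>+y. ennreal (gd x * gd y) * H (x\<^sup>2 + y\<^sup>2) \<partial>lborel)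
       = ennreal \<bar>x\<bar> * (\<integral>\<^sup>+u. ennreal (gd x * gd (0 + x*u)) * H (x\<^sup>2 + (0 + x*u)\<^sup>2) \<partial>lborel)"
      by (rule nn_integral_real_affine[OF _ x]) measurable
    also have "\<dots> = (\<integral>\<^sup>+u. ennreal \<bar>x\<bar> * (ennreal (gd x * gd (0 + x*u)) * H (x\<^sup>2 + (0 + x*u)\<^sup>2)) \<partial>lborel)"
      by (rule nn_integral_cmult[symmetric]) measurable
    also have "\<dots> = (\<integral>\<^sup>+u. ennreal (1/pi) * (ennreal \<bar>x\<bar> * Q ((1 + u\<^sup>2) * x\<^sup>2)) \<partial>lborel)"
    proof (rule nn_integral_cong)
      fix u
      have e: "x\<^sup>2 + (0 + x*u)\<^sup>2 = (1 + u\<^sup>2) * x\<^sup>2" by (simp add: power2_eq_square algebra_simps)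
      have g: "ennreal (gd x * gd (0 + x*u)) = ennreal (1/pi) * ennreal (exp (-((1 + u\<^sup>2) * x\<^sup>2)))"
      proof -
        have "gd x * gd (0 + x*u) = (1/pi) * exp (-((1 + u\<^sup>2) * x\<^sup>2))" by (simp only: gd_mult e) simp
        then have "ennreal (gd x * gd (0 + x*u)) = ennreal ((1/pi) * exp (-((1 + u\<^sup>2) * x\<^sup>2)))" by (simp only:)
        also have "\<dots> = ennreal (1/pi) * ennreal (exp (-((1 + u\<^sup>2) * x\<^sup>2)))" by (rule ennreal_mult) auto
        finally show ?thesis .
      qed
      show "ennreal \<bar>x\<bar> * (ennreal (gd x * gd (0 + x*u)) * H (x\<^sup>2 + (0 + x*u)\<^sup>2)) = ennreal (1/pi) * (ennreal \<bar>x\<bar> * Q ((1 + u\<^sup>2) * x\<^sup>2))"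
        unfolding Q_def e g by (simp only: mult_ac)
    qed
    finally show ?thesis .
  qed
  have "(\<integral>\<^sup>+x. \<integral>\<^sup>+y. ennreal (gd x * gd y) * H (x\<^sup>2 + y\<^sup>2) \<partial>lborel \<partial>lborel)
      = (\<integral>\<^sup>+x. \<integral>\<^sup>+u. ennreal (1/pi) * (ennreal \<bar>x\<bar> * Q ((1 + u\<^sup>2) * x\<^sup>2)) \<partial>lborel \<partial>lborel)"
    by (rule nn_integral_cong_AE) (use AE_lborel_singleton[of 0] inner in \<open>auto elim!: eventually_mono\<close>)
  also have "\<dots> = (\<integral>\<^sup>+u. \<integral>\<^sup>+x. ennreal (1/pi) * (ennreal \<bar>x\<bar> * Q ((1 + u\<^sup>2) * x\<^sup>2)) \<partial>lborel \<partial>lborel)"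
    by (rule lborel_pair.Fubini'[symmetric]) measurable
  also have "\<dots> = (\<integral>\<^sup>+u. ennreal (1 / (pi * (1 + u\<^sup>2))) * J \<partial>lborel)"
  proof (rule nn_integral_cong)
    fix u :: real
    have k: "1 + u\<^sup>2 > 0" by (simp add: add_pos_nonneg)
    have "(\<integral>\<^sup>+x. ennreal (1/pi) * (ennreal \<bar>x\<bar> * Q ((1 + u\<^sup>2) * x\<^sup>2)) \<partial>lborel)
        = ennreal (1/pi) * (\<integral>\<^sup>+x. ennreal \<bar>x\<bar> * Q ((1 + u\<^sup>2) * x\<^sup>2) \<partial>lborel)"
      by (rule nn_integral_cmult) measurable
    also have "\<dots> = ennreal (1/pi) * (ennreal (1/(1 + u\<^sup>2)) * J)"
      unfolding J_def by (simp only: sub_sq[OF Qm k])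
    also have "\<dots> = ennreal (1 / (pi * (1 + u\<^sup>2))) * J"
      using k by (simp add: ennreal_mult'[symmetric] mult.assoc[symmetric])
    finally show "(\<integral>\<^sup>+x. ennreal (1/pi) * (ennreal \<bar>x\<bar> * Q ((1 + u\<^sup>2) * x\<^sup>2)) \<partial>lborel) = ennreal (1 / (pi * (1 + u\<^sup>2))) * J" .
  qed
  also have "\<dots> = (\<integral>\<^sup>+u. ennreal (1 / (pi * (1 + u\<^sup>2))) \<partial>lborel) * J"
    by (rule nn_integral_multc) measurable
  finally show ?thesis unfolding J_def Q_def .
qed

lemma polar2:
  fixes H :: "real \<Rightarrow> ennreal"
  assumes [measurable]: "H \<in> borel_measurable borel"
  shows "(\<integral>\<^sup>+x. \<integral>\<^sup>+y. ennreal (gd x * gd y) * H (x\<^sup>2 + y\<^sup>2) \<partial>lborel \<partial>lborel)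
    = (\<integral>\<^sup>+t. ennreal (exp (-t)) * H t * indicator {0..} t \<partial>lborel)"
proof -
  have "(\<integral>\<^sup>+x. \<integral>\<^sup>+y. ennreal (gd x * gd y) * (\<lambda>_. 1) (x\<^sup>2 + y\<^sup>2) \<partial>lborel \<partial>lborel)
    = (\<integral>\<^sup>+u. ennreal (1 / (pi * (1 + u\<^sup>2))) \<partial>lborel) * (\<integral>\<^sup>+t. ennreal (exp (-t)) * (\<lambda>_. 1) t * indicator {0..} t \<partial>lborel)"
    by (rule polar_gen) simp
  moreover have "(\<integral>\<^sup>+x. \<integral>\<^sup>+y. ennreal (gd x * gd y) * (\<lambda>_. 1) (x\<^sup>2 + y\<^sup>2) \<partial>lborel \<partial>lborel) = 1"
  proof -
    have "(\<integral>\<^sup>+x. \<integral>\<^sup>+y. ennreal (gd x * gd y) * (\<lambda>_. 1) (x\<^sup>2 + y\<^sup>2) \<partial>lborel \<partial>lborel)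
        = (\<integral>\<^sup>+x. ennreal (gd x) * (\<integral>\<^sup>+y. ennreal (gd y) \<partial>lborel) \<partial>lborel)"
      by (intro nn_integral_cong) (simp add: ennreal_mult nn_integral_cmult[symmetric])
    also have "\<dots> = 1" by (simp add: nn_integral_gd)
    finally show ?thesis .
  qed
  ultimately have C: "(\<integral>\<^sup>+u. ennreal (1 / (pi * (1 + u\<^sup>2))) \<partial>lborel) = 1"
    using nn_integral_exp_neg by simp
  show ?thesis using polar_gen[OF assms] C by simp
qed


definition S0 :: "real \<Rightarrow> real^2^2" where
  "S0 \<rho> = (\<chi> i j. if i = j then (sqrt (1+\<rho>) + sqrt (1-\<rho>))/2 else (sqrt (1+\<rho>) - sqrt (1-\<rho>))/2)"

lemma psd_sqrt_R:
  assumes r: "0 < \<rho>" "\<rho> < 1"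
  shows "psd_sqrt (Rmat \<rho>) = S0 \<rho>"
  unfolding psd_sqrt_def
proof (rule the_equality)
  define p where "p = (sqrt (1+\<rho>) + sqrt (1-\<rho>))/2"
  define q where "q = (sqrt (1+\<rho>) - sqrt (1-\<rho>))/2"
  have S0e: "S0 \<rho> $ i $ j = (if i = j then p else q)" for i j unfolding S0_def p_def q_def by simp
  have sa: "sqrt (1+\<rho>) * sqrt (1+\<rho>) = 1+\<rho>" "sqrt (1-\<rho>) * sqrt (1-\<rho>) = 1-\<rho>" using r by simp_all
  have pq1: "p*p + q*q = 1" unfolding p_def q_def using sa by (simp add: field_simps power2_eq_square)
  have pq2: "p*q + q*p = \<rho>" unfolding p_def q_def using sa by (simp add: field_simps power2_eq_square)
  have pmq: "p - q = sqrt (1-\<rho>)" unfolding p_def q_def by (simp add: field_simps)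
  have qn: "0 \<le> q" unfolding q_def using r by (simp add: real_sqrt_le_mono)
  show "transpose (S0 \<rho>) = S0 \<rho> \<and> (\<forall>x. 0 \<le> x \<bullet> (S0 \<rho> *v x)) \<and> S0 \<rho> ** S0 \<rho> = Rmat \<rho>"
  proof (intro conjI allI)
    show "transpose (S0 \<rho>) = S0 \<rho>" by (simp add: vec_eq_iff transpose_def S0e)
    fix x :: "real^2"
    have "x \<bullet> (S0 \<rho> *v x) = (p - q) * ((x$1)\<^sup>2 + (x$2)\<^sup>2) + q * (x$1 + x$2)\<^sup>2"
      by (simp add: inner_vec_def matrix_vector_mult_def sum_2 S0e power2_eq_square algebra_simps)
    also have "\<dots> \<ge> 0" using pmq qn r by (intro add_nonneg_nonneg mult_nonneg_nonneg) auto
    finally show "0 \<le> x \<bullet> (S0 \<rho> *v x)" .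
  next
    show "S0 \<rho> ** S0 \<rho> = Rmat \<rho>"
      using pq1 pq2 by (simp add: vec_eq_iff matrix_matrix_mult_def sum_2 S0e Rmat_def forall_2)
  qed
next
  fix S :: "real^2^2"
  assume A: "transpose S = S \<and> (\<forall>x. 0 \<le> x \<bullet> (S *v x)) \<and> S ** S = Rmat \<rho>"
  define a where "a = S$1$1"
  define b where "b = S$1$2"
  define c where "c = S$2$2"
  have ba: "S$2$1 = b"
  proof -
    have "S$2$1 = (transpose S)$2$1" using A by simp
    also have "\<dots> = S$1$2" by (simp add: transpose_def)
    finally show ?thesis unfolding b_def .
  qed
  have psd: "0 \<le> x \<bullet> (S *v x)" for x using A by blast
  have q: "x \<bullet> (S *v x) = a * (x$1)\<^sup>2 + 2 * b * (x$1) * (x$2) + c * (x$2)\<^sup>2" for x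
    by (simp add: inner_vec_def matrix_vector_mult_def sum_2 a_def b_def c_def ba power2_eq_square algebra_simps)
  have an: "0 \<le> a" using psd[of "vector [1,0]"] q[of "vector [1,0]"] by simp
  have cn: "0 \<le> c" using psd[of "vector [0,1]"] q[of "vector [0,1]"] by simp
  have SS: "S ** S = Rmat \<rho>" using A by blast
  have e11: "a*a + b*b = 1" using arg_cong[OF SS, of "\<lambda>M. M$1$1"]
    by (simp add: matrix_matrix_mult_def sum_2 Rmat_def a_def b_def ba)
  have e22: "b*b + c*c = 1" using arg_cong[OF SS, of "\<lambda>M. M$2$2"]
    by (simp add: matrix_matrix_mult_def sum_2 Rmat_def c_def b_def ba)
  have e12: "a*b + b*c = \<rho>" using arg_cong[OF SS, of "\<lambda>M. M$1$2"]
    by (simp add: matrix_matrix_mult_def sum_2 Rmat_def a_def b_def c_def ba)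
  have "a*a = c*c" using e11 e22 by linarith
  then have "sqrt (a*a) = sqrt (c*c)" by simp
  then have "\<bar>a\<bar> = \<bar>c\<bar>" by (simp only: real_sqrt_abs2)
  then have ac: "a = c" using an cn by simp
  have apb: "0 \<le> a + b" using psd[of "vector [1,1]"] q[of "vector [1,1]"] ac by simp
  have amb: "0 \<le> a - b" using psd[of "vector [1,-1]"] q[of "vector [1,-1]"] ac by simp
  have "(a+b)\<^sup>2 = 1 + \<rho>" using e11 e12 ac by (simp add: power2_eq_square algebra_simps)
  then have s1: "a + b = sqrt (1+\<rho>)" using apb by (intro real_sqrt_unique[symmetric]) auto
  have "(a-b)\<^sup>2 = 1 - \<rho>" using e11 e12 ac by (simp add: power2_eq_square algebra_simps)
  then have s2: "a - b = sqrt (1-\<rho>)" using amb by (intro real_sqrt_unique[symmetric]) auto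
  have av: "a = (sqrt (1+\<rho>) + sqrt (1-\<rho>))/2" using s1 s2 by simp
  have bv: "b = (sqrt (1+\<rho>) - sqrt (1-\<rho>))/2" using s1 s2 by simp
  show "S = S0 \<rho>"
    unfolding vec_eq_iff forall_2 S0_def using av bv ac ba
    by (simp add: a_def b_def c_def)
qed


definition G :: "real measure" where "G = density lborel (\<lambda>x. ennreal (gd x))"

lemma sets_G[measurable_cong, simp]: "sets G = sets borel" unfolding G_def by simp
lemma space_G[simp]: "space G = UNIV" unfolding G_def by simp

lemma prob_space_G: "prob_space G"
  unfolding G_def gd_normal[symmetric] by (rule prob_space_normal_density) simp

interpretation G: prob_space G by (rule prob_space_G)
interpretation GG: pair_prob_space G G by standard

lemma nn_integral_G: "f \<in> borel_measurable borel \<Longrightarrow> (\<integral>\<^sup>+x. f x \<partial>G) = (\<integral>\<^sup>+x. ennreal (gd x) * f x \<partial>lborel)"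
  unfolding G_def by (subst nn_integral_density) auto

lemma swapG:
  fixes f :: "real \<Rightarrow> real \<Rightarrow> ennreal"
  assumes "(\<lambda>(x,y). f x y) \<in> borel_measurable (borel \<Otimes>\<^sub>M borel)"
  shows "(\<integral>\<^sup>+x. \<integral>\<^sup>+y. f x y \<partial>G \<partial>G) = (\<integral>\<^sup>+y. \<integral>\<^sup>+x. f x y \<partial>G \<partial>G)"
proof -
  have "(\<lambda>(x,y). f x y) \<in> borel_measurable (G \<Otimes>\<^sub>M G)"
    using assms by (simp cong: measurable_cong_sets)
  then show ?thesis using GG.Fubini'[of f] by simp
qed

lemma iter_G:
  fixes F :: "real \<times> real \<Rightarrow> ennreal"
  assumes [measurable]: "F \<in> borel_measurable borel"
  shows "(\<integral>\<^sup>+x. \<integral>\<^sup>+y. F (x, y) \<partial>G \<partial>G) = (\<integral>\<^sup>+x. \<integral>\<^sup>+y. ennreal (gd x * gd y) * F (x, y) \<partial>lborel \<partial>lborel)"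
proof -
  have Fp[measurable]: "F \<in> borel_measurable (borel \<Otimes>\<^sub>M borel)" using assms by (simp add: borel_prod)
  have "(\<integral>\<^sup>+x. \<integral>\<^sup>+y. F (x, y) \<partial>G \<partial>G) = (\<integral>\<^sup>+x. ennreal (gd x) * (\<integral>\<^sup>+y. ennreal (gd y) * F (x, y) \<partial>lborel) \<partial>lborel)"
    by (simp add: nn_integral_G)
  also have "\<dots> = (\<integral>\<^sup>+x. \<integral>\<^sup>+y. ennreal (gd x * gd y) * F (x, y) \<partial>lborel \<partial>lborel)"
    by (intro nn_integral_cong) (simp add: nn_integral_cmult[symmetric] ennreal_mult mult.assoc)
  finally show ?thesis .
qed

lemma rotG:
  fixes F :: "real \<times> real \<Rightarrow> ennreal"
  assumes [measurable]: "F \<in> borel_measurable borel" and cd: "c\<^sup>2 + d\<^sup>2 = 1"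
  shows "(\<integral>\<^sup>+x. \<integral>\<^sup>+y. F (c*x + d*y, -d*x + c*y) \<partial>G \<partial>G) = (\<integral>\<^sup>+x. \<integral>\<^sup>+y. F (x, y) \<partial>G \<partial>G)"
proof -
  have Fp[measurable]: "F \<in> borel_measurable (borel \<Otimes>\<^sub>M borel)" using assms by (simp add: borel_prod)
  have "(\<lambda>p. F (c * fst p + d * snd p, -d * fst p + c * snd p)) \<in> borel_measurable (borel \<Otimes>\<^sub>M borel)" by measurable
  then have m: "(\<lambda>p. F (c * fst p + d * snd p, -d * fst p + c * snd p)) \<in> borel_measurable borel" by (simp add: borel_prod)
  show ?thesis
    using iter_G[OF m] iter_G[OF assms(1)] rotg[OF assms] by simp
qed

lemma polarG:
  fixes H :: "real \<Rightarrow> ennreal"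
  assumes [measurable]: "H \<in> borel_measurable borel"
  shows "(\<integral>\<^sup>+x. \<integral>\<^sup>+y. H (x\<^sup>2 + y\<^sup>2) \<partial>G \<partial>G) = (\<integral>\<^sup>+t. ennreal (exp (-t)) * H t * indicator {0..} t \<partial>lborel)"
proof -
  have "(\<lambda>p. H ((fst p)\<^sup>2 + (snd p)\<^sup>2)) \<in> borel_measurable (borel \<Otimes>\<^sub>M borel)" by measurable
  then have m: "(\<lambda>p. H ((fst p)\<^sup>2 + (snd p)\<^sup>2)) \<in> borel_measurable borel" by (simp add: borel_prod)
  show ?thesis using iter_G[OF m] polar2[OF assms] by simp
qed

lemma nn_integral_G_const: "(\<integral>\<^sup>+x. c \<partial>G) = c"
  using G.emeasure_space_1 by simp


lemma polar_decomp:
  fixes p q :: real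
  obtains r c d where "r \<ge> 0" "c\<^sup>2 + d\<^sup>2 = 1" "p = r * c" "q = r * d" "r\<^sup>2 = p\<^sup>2 + q\<^sup>2"
proof (cases "p\<^sup>2 + q\<^sup>2 = 0")
  case True
  then have "p = 0" "q = 0" by (auto simp: add_nonneg_eq_0_iff)
  then show ?thesis by (intro that[of 0 1 0]) auto
next
  case False
  have nz: "p \<noteq> 0 \<or> q \<noteq> 0" using False by auto
  define r where "r = sqrt (p\<^sup>2 + q\<^sup>2)"
  have "0 \<le> p\<^sup>2 + q\<^sup>2" by simp
  then have "p\<^sup>2 + q\<^sup>2 > 0" using False by linarith
  then have r0: "r > 0" unfolding r_def by simp
  have r2: "r\<^sup>2 = p\<^sup>2 + q\<^sup>2" unfolding r_def by (simp add: add_nonneg_nonneg)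
  show ?thesis
  proof (rule that[of r "p/r" "q/r"])
    have "(p/r)\<^sup>2 + (q/r)\<^sup>2 = (p\<^sup>2 + q\<^sup>2)/r\<^sup>2" by (simp add: power_divide add_divide_distrib)
    also have "\<dots> = 1" using r0 by (simp add: r2[symmetric])
    finally show "(p/r)\<^sup>2 + (q/r)\<^sup>2 = 1" .
  qed (use r0 r2 nz in \<open>auto simp: field_simps\<close>)
qed

lemma emeasure_G_UNIV[simp]: "emeasure G UNIV = 1"
  using G.emeasure_space_1 by simp

lemma meas_pair:
  fixes f :: "real \<times> real \<Rightarrow> ennreal"
  shows "f \<in> borel_measurable (borel \<Otimes>\<^sub>M borel) \<Longrightarrow> f \<in> borel_measurable borel"
  by (simp add: borel_prod)

lemma L1core:
  fixes \<Phi> :: "real \<Rightarrow> ennreal"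
  assumes [measurable]: "\<Phi> \<in> borel_measurable borel"
  shows "(\<integral>\<^sup>+a1. \<integral>\<^sup>+b1. \<integral>\<^sup>+a2. \<integral>\<^sup>+b2. \<Phi> ((a1*p1 + b1*q1 + a2*p2 + b2*q2)\<^sup>2 + (a1*q1 - b1*p1 + a2*q2 - b2*p2)\<^sup>2) \<partial>G \<partial>G \<partial>G \<partial>G)
     = (\<integral>\<^sup>+t. ennreal (exp (-t)) * \<Phi> ((p1\<^sup>2 + q1\<^sup>2 + p2\<^sup>2 + q2\<^sup>2) * t) * indicator {0..} t \<partial>lborel)"
proof -
  obtain r1 c1 d1 where P1: "r1 \<ge> 0" "c1\<^sup>2 + d1\<^sup>2 = 1" "p1 = r1 * c1" "q1 = r1 * d1" "r1\<^sup>2 = p1\<^sup>2 + q1\<^sup>2"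
    by (rule polar_decomp)
  obtain r2 c2 d2 where P2: "r2 \<ge> 0" "c2\<^sup>2 + d2\<^sup>2 = 1" "p2 = r2 * c2" "q2 = r2 * d2" "r2\<^sup>2 = p2\<^sup>2 + q2\<^sup>2"
    by (rule polar_decomp)
  obtain r c d where P: "r \<ge> 0" "c\<^sup>2 + d\<^sup>2 = 1" "r1 = r * c" "r2 = r * d" "r\<^sup>2 = r1\<^sup>2 + r2\<^sup>2"
    by (rule polar_decomp)
  define \<Psi> where "\<Psi> = (\<lambda>x1 y1 x2 y2. \<Phi> ((r1*x1 + r2*x2)\<^sup>2 + (r1*y1 + r2*y2)\<^sup>2))"
  have [measurable]: "(\<lambda>x. \<Psi> (f1 x) (f2 x) (f3 x) (f4 x)) \<in> borel_measurable M"
    if [measurable]: "f1 \<in> borel_measurable M" "f2 \<in> borel_measurable M" "f3 \<in> borel_measurable M" "f4 \<in> borel_measurable M" for M f1 f2 f3 f4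
    unfolding \<Psi>_def by measurable
  have step1: "\<Phi> ((a1*p1 + b1*q1 + a2*p2 + b2*q2)\<^sup>2 + (a1*q1 - b1*p1 + a2*q2 - b2*p2)\<^sup>2)
      = \<Psi> (c1*a1 + d1*b1) (-d1*a1 + c1*b1) (c2*a2 + d2*b2) (-d2*a2 + c2*b2)" for a1 b1 a2 b2
  proof -
    have "(a1*q1 - b1*p1 + a2*q2 - b2*p2)\<^sup>2 = (r1*(-d1*a1 + c1*b1) + r2*(-d2*a2 + c2*b2))\<^sup>2"
      unfolding P1(3,4) P2(3,4) by (simp add: power2_eq_square algebra_simps)
    moreover have "a1*p1 + b1*q1 + a2*p2 + b2*q2 = r1*(c1*a1 + d1*b1) + r2*(c2*a2 + d2*b2)"
      unfolding P1(3,4) P2(3,4) by (simp add: algebra_simps)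
    ultimately show ?thesis unfolding \<Psi>_def by simp
  qed
  have "(\<integral>\<^sup>+a1. \<integral>\<^sup>+b1. \<integral>\<^sup>+a2. \<integral>\<^sup>+b2. \<Phi> ((a1*p1 + b1*q1 + a2*p2 + b2*q2)\<^sup>2 + (a1*q1 - b1*p1 + a2*q2 - b2*p2)\<^sup>2) \<partial>G \<partial>G \<partial>G \<partial>G)
     = (\<integral>\<^sup>+a1. \<integral>\<^sup>+b1. \<integral>\<^sup>+a2. \<integral>\<^sup>+b2. \<Psi> (c1*a1 + d1*b1) (-d1*a1 + c1*b1) (c2*a2 + d2*b2) (-d2*a2 + c2*b2) \<partial>G \<partial>G \<partial>G \<partial>G)"
    by (simp only: step1)
  also have "\<dots> = (\<integral>\<^sup>+a1. \<integral>\<^sup>+b1. \<integral>\<^sup>+a2. \<integral>\<^sup>+b2. \<Psi> (c1*a1 + d1*b1) (-d1*a1 + c1*b1) a2 b2 \<partial>G \<partial>G \<partial>G \<partial>G)"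
  proof (rule nn_integral_cong, rule nn_integral_cong)
    fix a1 b1
    show "(\<integral>\<^sup>+a2. \<integral>\<^sup>+b2. \<Psi> (c1*a1 + d1*b1) (-d1*a1 + c1*b1) (c2*a2 + d2*b2) (-d2*a2 + c2*b2) \<partial>G \<partial>G)
        = (\<integral>\<^sup>+a2. \<integral>\<^sup>+b2. \<Psi> (c1*a1 + d1*b1) (-d1*a1 + c1*b1) a2 b2 \<partial>G \<partial>G)"
      proof -
      have mm: "(\<lambda>p. \<Psi> (c1*a1 + d1*b1) (-d1*a1 + c1*b1) (fst p) (snd p)) \<in> borel_measurable borel" by (rule meas_pair) measurable
      show ?thesis using rotG[OF mm P2(2)] by simp
    qed
  qed
  also have "\<dots> = (\<integral>\<^sup>+a1. \<integral>\<^sup>+b1. \<integral>\<^sup>+a2. \<integral>\<^sup>+b2. \<Psi> a1 b1 a2 b2 \<partial>G \<partial>G \<partial>G \<partial>G)"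
    proof -
      have mm: "(\<lambda>p::real\<times>real. \<integral>\<^sup>+a2. \<integral>\<^sup>+b2. \<Psi> (fst p) (snd p) a2 b2 \<partial>G \<partial>G) \<in> borel_measurable borel" by (rule meas_pair) measurable
      show ?thesis using rotG[OF mm P1(2)] by simp
    qed
  also have "\<dots> = (\<integral>\<^sup>+a1. \<integral>\<^sup>+a2. \<integral>\<^sup>+b1. \<integral>\<^sup>+b2. \<Psi> a1 b1 a2 b2 \<partial>G \<partial>G \<partial>G \<partial>G)"
    by (rule nn_integral_cong, rule swapG) measurable
  also have "\<dots> = (\<integral>\<^sup>+a1. \<integral>\<^sup>+a2. \<integral>\<^sup>+b1. \<integral>\<^sup>+b2. \<Phi> ((r1*a1 + r2*a2)\<^sup>2 + (r * (c*b1 + d*b2))\<^sup>2) \<partial>G \<partial>G \<partial>G \<partial>G)"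
    unfolding \<Psi>_def P(3,4) by (simp add: algebra_simps)
  also have "\<dots> = (\<integral>\<^sup>+a1. \<integral>\<^sup>+a2. \<integral>\<^sup>+b1. \<integral>\<^sup>+b2. \<Phi> ((r1*a1 + r2*a2)\<^sup>2 + (r * b1)\<^sup>2) \<partial>G \<partial>G \<partial>G \<partial>G)"
  proof (rule nn_integral_cong, rule nn_integral_cong)
    fix a1 a2
    show "(\<integral>\<^sup>+b1. \<integral>\<^sup>+b2. \<Phi> ((r1*a1 + r2*a2)\<^sup>2 + (r * (c*b1 + d*b2))\<^sup>2) \<partial>G \<partial>G)
        = (\<integral>\<^sup>+b1. \<integral>\<^sup>+b2. \<Phi> ((r1*a1 + r2*a2)\<^sup>2 + (r * b1)\<^sup>2) \<partial>G \<partial>G)"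
      proof -
      have mm: "(\<lambda>p::real\<times>real. \<Phi> ((r1*a1 + r2*a2)\<^sup>2 + (r * fst p)\<^sup>2)) \<in> borel_measurable borel" by (rule meas_pair) measurable
      show ?thesis using rotG[OF mm P(2)] by simp
    qed
  qed
  also have "\<dots> = (\<integral>\<^sup>+a1. \<integral>\<^sup>+a2. \<integral>\<^sup>+b1. \<integral>\<^sup>+b2. \<Phi> ((r * (c*a1 + d*a2))\<^sup>2 + (r * b1)\<^sup>2) \<partial>G \<partial>G \<partial>G \<partial>G)"
    unfolding P(3,4) by (simp add: algebra_simps)
  also have "\<dots> = (\<integral>\<^sup>+a1. \<integral>\<^sup>+a2. \<integral>\<^sup>+b1. \<integral>\<^sup>+b2. \<Phi> ((r * a1)\<^sup>2 + (r * b1)\<^sup>2) \<partial>G \<partial>G \<partial>G \<partial>G)"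
    proof -
      have mm: "(\<lambda>p::real\<times>real. \<integral>\<^sup>+b1. \<integral>\<^sup>+b2. \<Phi> ((r * fst p)\<^sup>2 + (r * b1)\<^sup>2) \<partial>G \<partial>G) \<in> borel_measurable borel" by (rule meas_pair) measurable
      show ?thesis using rotG[OF mm P(2)] by simp
    qed
  also have "\<dots> = (\<integral>\<^sup>+a1. \<integral>\<^sup>+b1. \<Phi> (r\<^sup>2 * (a1\<^sup>2 + b1\<^sup>2)) \<partial>G \<partial>G)"
  proof -
    have "(\<integral>\<^sup>+a1. \<integral>\<^sup>+a2. \<integral>\<^sup>+b1. \<integral>\<^sup>+b2. \<Phi> ((r * a1)\<^sup>2 + (r * b1)\<^sup>2) \<partial>G \<partial>G \<partial>G \<partial>G)
        = (\<integral>\<^sup>+a1. \<integral>\<^sup>+a2. \<integral>\<^sup>+b1. \<Phi> (r\<^sup>2 * (a1\<^sup>2 + b1\<^sup>2)) \<partial>G \<partial>G \<partial>G)"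
      by (simp add: nn_integral_G_const power_mult_distrib distrib_left)
    also have "\<dots> = (\<integral>\<^sup>+a1. \<integral>\<^sup>+b1. \<Phi> (r\<^sup>2 * (a1\<^sup>2 + b1\<^sup>2)) \<partial>G \<partial>G)"
      by (simp add: nn_integral_G_const)
    finally show ?thesis .
  qed
  also have "\<dots> = (\<integral>\<^sup>+t. ennreal (exp (-t)) * \<Phi> (r\<^sup>2 * t) * indicator {0..} t \<partial>lborel)"
    by (rule polarG[of "\<lambda>t. \<Phi> (r\<^sup>2 * t)"]) measurable
  also have "r\<^sup>2 = p1\<^sup>2 + q1\<^sup>2 + p2\<^sup>2 + q2\<^sup>2" using P(5) P1(5) P2(5) by simp
  finally show ?thesis .
qed

lemma L2core:
  fixes \<Xi> :: "real \<Rightarrow> real \<Rightarrow> ennreal"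
  assumes Xm: "(\<lambda>(x,y). \<Xi> x y) \<in> borel_measurable (borel \<Otimes>\<^sub>M borel)"
  shows "(\<integral>\<^sup>+c1. \<integral>\<^sup>+d1. \<integral>\<^sup>+c2. \<integral>\<^sup>+d2. \<Xi> (c1\<^sup>2 + d1\<^sup>2 + c2\<^sup>2 + d2\<^sup>2) (c1*c2 + d1*d2) \<partial>G \<partial>G \<partial>G \<partial>G)
     = (\<integral>\<^sup>+t. ennreal (exp (-t)) * (\<integral>\<^sup>+u. ennreal (exp (-u)) * \<Xi> (t + u) ((t - u)/2) * indicator {0..} u \<partial>lborel) * indicator {0..} t \<partial>lborel)"
proof -
  have [measurable]: "(\<lambda>x. \<Xi> (f x) (g x)) \<in> borel_measurable M"
    if [measurable]: "f \<in> borel_measurable M" "g \<in> borel_measurable M" for M and f g :: "'a \<Rightarrow> real"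
  proof -
    have "(\<lambda>x. (f x, g x)) \<in> M \<rightarrow>\<^sub>M borel \<Otimes>\<^sub>M borel" by measurable
    from measurable_compose[OF this Xm] show ?thesis by simp
  qed
  define k :: real where "k = 1 / sqrt 2"
  have kk: "k\<^sup>2 + k\<^sup>2 = 1" unfolding k_def by (simp add: power_divide)
  have k2: "k * k = 1/2" unfolding k_def by (simp add: power2_eq_square[symmetric] power_divide)
  define F where "F = (\<lambda>e f e' f'. \<Xi> (e\<^sup>2 + f\<^sup>2 + e'\<^sup>2 + f'\<^sup>2) ((e\<^sup>2 - f\<^sup>2 + e'\<^sup>2 - f'\<^sup>2)/2))"
  have [measurable]: "(\<lambda>x. F (f1 x) (f2 x) (f3 x) (f4 x)) \<in> borel_measurable M"
    if [measurable]: "f1 \<in> borel_measurable M" "f2 \<in> borel_measurable M" "f3 \<in> borel_measurable M" "f4 \<in> borel_measurable M" for M f1 f2 f3 f4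
    unfolding F_def by measurable
  have eqF: "\<Xi> (c1\<^sup>2 + d1\<^sup>2 + c2\<^sup>2 + d2\<^sup>2) (c1*c2 + d1*d2) = F (k*c1 + k*c2) (-k*c1 + k*c2) (k*d1 + k*d2) (-k*d1 + k*d2)" for c1 d1 c2 d2
  proof -
    have B: "(k*c1 + k*c2)\<^sup>2 + (-k*c1 + k*c2)\<^sup>2 + (k*d1 + k*d2)\<^sup>2 + (-k*d1 + k*d2)\<^sup>2 = 2*(k*k)*(c1\<^sup>2 + d1\<^sup>2 + c2\<^sup>2 + d2\<^sup>2)"
      by (simp add: power2_eq_square algebra_simps)
    have A: "(k*c1 + k*c2)\<^sup>2 - (-k*c1 + k*c2)\<^sup>2 + (k*d1 + k*d2)\<^sup>2 - (-k*d1 + k*d2)\<^sup>2 = 4*(k*k)*(c1*c2 + d1*d2)"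
      by (simp add: power2_eq_square algebra_simps)
    show ?thesis unfolding F_def A B k2 by (simp add: add_divide_distrib)
  qed
  have "(\<integral>\<^sup>+c1. \<integral>\<^sup>+d1. \<integral>\<^sup>+c2. \<integral>\<^sup>+d2. \<Xi> (c1\<^sup>2 + d1\<^sup>2 + c2\<^sup>2 + d2\<^sup>2) (c1*c2 + d1*d2) \<partial>G \<partial>G \<partial>G \<partial>G)
     = (\<integral>\<^sup>+c1. \<integral>\<^sup>+c2. \<integral>\<^sup>+d1. \<integral>\<^sup>+d2. \<Xi> (c1\<^sup>2 + d1\<^sup>2 + c2\<^sup>2 + d2\<^sup>2) (c1*c2 + d1*d2) \<partial>G \<partial>G \<partial>G \<partial>G)"
    by (rule nn_integral_cong, rule swapG) measurable
  also have "\<dots> = (\<integral>\<^sup>+c1. \<integral>\<^sup>+c2. \<integral>\<^sup>+d1. \<integral>\<^sup>+d2. F (k*c1 + k*c2) (-k*c1 + k*c2) (k*d1 + k*d2) (-k*d1 + k*d2) \<partial>G \<partial>G \<partial>G \<partial>G)"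
    by (simp only: eqF)
  also have "\<dots> = (\<integral>\<^sup>+c1. \<integral>\<^sup>+c2. \<integral>\<^sup>+d1. \<integral>\<^sup>+d2. F (k*c1 + k*c2) (-k*c1 + k*c2) d1 d2 \<partial>G \<partial>G \<partial>G \<partial>G)"
  proof (rule nn_integral_cong, rule nn_integral_cong)
    fix c1 c2
    show "(\<integral>\<^sup>+d1. \<integral>\<^sup>+d2. F (k*c1 + k*c2) (-k*c1 + k*c2) (k*d1 + k*d2) (-k*d1 + k*d2) \<partial>G \<partial>G)
        = (\<integral>\<^sup>+d1. \<integral>\<^sup>+d2. F (k*c1 + k*c2) (-k*c1 + k*c2) d1 d2 \<partial>G \<partial>G)"
    proof -
      have mm: "(\<lambda>p::real\<times>real. F (k*c1 + k*c2) (-k*c1 + k*c2) (fst p) (snd p)) \<in> borel_measurable borel" by (rule meas_pair) measurable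
      show ?thesis using rotG[OF mm kk] by simp
    qed
  qed
  also have "\<dots> = (\<integral>\<^sup>+c1. \<integral>\<^sup>+c2. \<integral>\<^sup>+d1. \<integral>\<^sup>+d2. F c1 c2 d1 d2 \<partial>G \<partial>G \<partial>G \<partial>G)"
  proof -
    have mm: "(\<lambda>p::real\<times>real. \<integral>\<^sup>+d1. \<integral>\<^sup>+d2. F (fst p) (snd p) d1 d2 \<partial>G \<partial>G) \<in> borel_measurable borel" by (rule meas_pair) measurable
    show ?thesis using rotG[OF mm kk] by simp
  qed
  also have "\<dots> = (\<integral>\<^sup>+c1. \<integral>\<^sup>+d1. \<integral>\<^sup>+c2. \<integral>\<^sup>+d2. F c1 c2 d1 d2 \<partial>G \<partial>G \<partial>G \<partial>G)"
    by (rule nn_integral_cong, rule swapG) measurable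
  also have "\<dots> = (\<integral>\<^sup>+c1. \<integral>\<^sup>+d1. (\<lambda>t. \<integral>\<^sup>+c2. \<integral>\<^sup>+d2. (\<lambda>u. \<Xi> (t + u) ((t - u)/2)) (c2\<^sup>2 + d2\<^sup>2) \<partial>G \<partial>G) (c1\<^sup>2 + d1\<^sup>2) \<partial>G \<partial>G)"
    unfolding F_def by (simp add: algebra_simps diff_divide_distrib add_divide_distrib)
  also have "\<dots> = (\<integral>\<^sup>+t. ennreal (exp (-t)) * (\<lambda>t. \<integral>\<^sup>+c2. \<integral>\<^sup>+d2. (\<lambda>u. \<Xi> (t + u) ((t - u)/2)) (c2\<^sup>2 + d2\<^sup>2) \<partial>G \<partial>G) t * indicator {0..} t \<partial>lborel)"
    by (rule polarG) measurable
  also have "\<dots> = (\<integral>\<^sup>+t. ennreal (exp (-t)) * (\<integral>\<^sup>+u. ennreal (exp (-u)) * \<Xi> (t + u) ((t - u)/2) * indicator {0..} u \<partial>lborel) * indicator {0..} t \<partial>lborel)"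
  proof (rule nn_integral_cong)
    fix t
    have "(\<integral>\<^sup>+c2. \<integral>\<^sup>+d2. (\<lambda>u. \<Xi> (t + u) ((t - u)/2)) (c2\<^sup>2 + d2\<^sup>2) \<partial>G \<partial>G) = (\<integral>\<^sup>+u. ennreal (exp (-u)) * \<Xi> (t + u) ((t - u)/2) * indicator {0..} u \<partial>lborel)"
      by (rule polarG) measurable
    then show "ennreal (exp (-t)) * (\<lambda>t. \<integral>\<^sup>+c2. \<integral>\<^sup>+d2. (\<lambda>u. \<Xi> (t + u) ((t - u)/2)) (c2\<^sup>2 + d2\<^sup>2) \<partial>G \<partial>G) t * indicator {0..} t
      = ennreal (exp (-t)) * (\<integral>\<^sup>+u. ennreal (exp (-u)) * \<Xi> (t + u) ((t - u)/2) * indicator {0..} u \<partial>lborel) * indicator {0..} t" by simp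
  qed
  finally show ?thesis .
qed


lemma int_u_exp:
  assumes z: "z \<ge> 0"
  shows "(\<integral>\<^sup>+u. ennreal (u * exp (-(u * (1 + z)))) * indicator {0..} u \<partial>lborel) = ennreal (1 / (1 + z)\<^sup>2)"
proof -
  define c where "c = 1 + z"
  have c: "c > 0" "c \<noteq> 0" using z unfolding c_def by auto
  have "1 = (\<integral>\<^sup>+x. ennreal (x^1 * exp (-x)) * indicator {0 ..} x \<partial>lborel)"
    using nn_intergal_power_times_exp_Ici[of 1] by simp
  also have "\<dots> = ennreal \<bar>c\<bar> * (\<integral>\<^sup>+u. ennreal ((0 + c*u)^1 * exp (-(0 + c*u))) * indicator {0 ..} (0 + c*u) \<partial>lborel)"
    by (rule nn_integral_real_affine) (use c in auto)
  also have "(\<integral>\<^sup>+u. ennreal ((0 + c*u)^1 * exp (-(0 + c*u))) * indicator {0 ..} (0 + c*u) \<partial>lborel)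
      = (\<integral>\<^sup>+u. ennreal c * (ennreal (u * exp (-(u * (1 + z)))) * indicator {0..} u) \<partial>lborel)"
  proof (rule nn_integral_cong)
    fix u
    show "ennreal ((0 + c*u)^1 * exp (-(0 + c*u))) * indicator {0 ..} (0 + c*u) = ennreal c * (ennreal (u * exp (-(u * (1 + z)))) * indicator {0..} u)"
    proof (cases "0 \<le> u")
      case True
      then have "ennreal ((0 + c*u)^1 * exp (-(0 + c*u))) = ennreal c * ennreal (u * exp (-(u * (1 + z))))"
        using c by (subst ennreal_mult[symmetric]) (auto simp: c_def mult_ac)
      then show ?thesis using True c by (simp add: indicator_def zero_le_mult_iff)
    next
      case False
      then show ?thesis using c by (simp add: indicator_def zero_le_mult_iff)
    qed
  qed
  also have "ennreal \<bar>c\<bar> * (\<integral>\<^sup>+u. ennreal c * (ennreal (u * exp (-(u * (1 + z)))) * indicator {0..} u) \<partial>lborel) = ennreal (c * c) * (\<integral>\<^sup>+u. ennreal (u * exp (-(u * (1 + z)))) * indicator {0..} u \<partial>lborel)"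
    using c by (subst nn_integral_cmult) (auto simp: ennreal_mult mult.assoc)
  finally have e: "ennreal (c * c) * (\<integral>\<^sup>+u. ennreal (u * exp (-(u * (1 + z)))) * indicator {0..} u \<partial>lborel) = 1" ..
  have "(\<integral>\<^sup>+u. ennreal (u * exp (-(u * (1 + z)))) * indicator {0..} u \<partial>lborel)
      = ennreal (1/(c*c)) * (ennreal (c * c) * (\<integral>\<^sup>+u. ennreal (u * exp (-(u * (1 + z)))) * indicator {0..} u \<partial>lborel))"
    using c by (simp add: mult.assoc[symmetric] ennreal_mult[symmetric])
  also have "\<dots> = ennreal (1 / (1 + z)\<^sup>2)" by (subst e) (simp add: c_def power2_eq_square)
  finally show ?thesis .
qed

lemma L3:
  fixes \<Theta> :: "real \<Rightarrow> real \<Rightarrow> ennreal"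
  assumes Tm: "(\<lambda>(x,y). \<Theta> x y) \<in> borel_measurable (borel \<Otimes>\<^sub>M borel)"
    and hom: "\<And>u z. u > 0 \<Longrightarrow> z \<ge> 0 \<Longrightarrow> \<Theta> (u * z) u = \<Theta> z 1"
  shows "(\<integral>\<^sup>+t. ennreal (exp (-t)) * (\<integral>\<^sup>+u. ennreal (exp (-u)) * \<Theta> t u * indicator {0..} u \<partial>lborel) * indicator {0..} t \<partial>lborel)
     = (\<integral>\<^sup>+z. \<Theta> z 1 * ennreal (1 / (1 + z)\<^sup>2) * indicator {0..} z \<partial>lborel)"
proof -
  have [measurable]: "(\<lambda>x. \<Theta> (f x) (g x)) \<in> borel_measurable M"
    if [measurable]: "f \<in> borel_measurable M" "g \<in> borel_measurable M" for M and f g :: "'a \<Rightarrow> real"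
  proof -
    have "(\<lambda>x. (f x, g x)) \<in> M \<rightarrow>\<^sub>M borel \<Otimes>\<^sub>M borel" by measurable
    from measurable_compose[OF this Tm] show ?thesis by simp
  qed
  have "(\<integral>\<^sup>+t. ennreal (exp (-t)) * (\<integral>\<^sup>+u. ennreal (exp (-u)) * \<Theta> t u * indicator {0..} u \<partial>lborel) * indicator {0..} t \<partial>lborel)
      = (\<integral>\<^sup>+t. \<integral>\<^sup>+u. ennreal (exp (-t)) * indicator {0..} t * (ennreal (exp (-u)) * \<Theta> t u * indicator {0..} u) \<partial>lborel \<partial>lborel)"
    by (intro nn_integral_cong) (subst nn_integral_cmult; simp add: mult_ac)
  also have "\<dots> = (\<integral>\<^sup>+u. \<integral>\<^sup>+t. ennreal (exp (-t)) * indicator {0..} t * (ennreal (exp (-u)) * \<Theta> t u * indicator {0..} u) \<partial>lborel \<partial>lborel)"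
    by (rule lborel_pair.Fubini'[symmetric]) measurable
  also have "\<dots> = (\<integral>\<^sup>+u. \<integral>\<^sup>+z. ennreal (u * exp (-u) * exp (-(u*z))) * indicator {0..} u * (\<Theta> z 1 * indicator {0..} z) \<partial>lborel \<partial>lborel)"
  proof (rule nn_integral_cong_AE)
    show "AE u in lborel. (\<integral>\<^sup>+t. ennreal (exp (-t)) * indicator {0..} t * (ennreal (exp (-u)) * \<Theta> t u * indicator {0..} u) \<partial>lborel)
        = (\<integral>\<^sup>+z. ennreal (u * exp (-u) * exp (-(u*z))) * indicator {0..} u * (\<Theta> z 1 * indicator {0..} z) \<partial>lborel)"
      using AE_lborel_singleton[of 0]
    proof (rule eventually_mono)
      fix u :: real assume u0: "u \<noteq> 0"
      show "(\<integral>\<^sup>+t. ennreal (exp (-t)) * indicator {0..} t * (ennreal (exp (-u)) * \<Theta> t u * indicator {0..} u) \<partial>lborel)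
        = (\<integral>\<^sup>+z. ennreal (u * exp (-u) * exp (-(u*z))) * indicator {0..} u * (\<Theta> z 1 * indicator {0..} z) \<partial>lborel)"
      proof (cases "u > 0")
        case False
        then have "u < 0" using u0 by simp
        then show ?thesis by (simp add: indicator_def)
      next
        case True
        have "(\<integral>\<^sup>+t. ennreal (exp (-t)) * indicator {0..} t * (ennreal (exp (-u)) * \<Theta> t u * indicator {0..} u) \<partial>lborel)
          = ennreal \<bar>u\<bar> * (\<integral>\<^sup>+z. ennreal (exp (-(0 + u*z))) * indicator {0..} (0 + u*z) * (ennreal (exp (-u)) * \<Theta> (0 + u*z) u * indicator {0..} u) \<partial>lborel)"
          by (rule nn_integral_real_affine) (use True in auto)
        also have "\<dots> = (\<integral>\<^sup>+z. ennreal \<bar>u\<bar> * (ennreal (exp (-(0 + u*z))) * indicator {0..} (0 + u*z) * (ennreal (exp (-u)) * \<Theta> (0 + u*z) u * indicator {0..} u)) \<partial>lborel)"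
          by (rule nn_integral_cmult[symmetric]) measurable
        also have "\<dots> = (\<integral>\<^sup>+z. ennreal (u * exp (-u) * exp (-(u*z))) * indicator {0..} u * (\<Theta> z 1 * indicator {0..} z) \<partial>lborel)"
        proof (rule nn_integral_cong)
          fix z
          show "ennreal \<bar>u\<bar> * (ennreal (exp (-(0 + u*z))) * indicator {0..} (0 + u*z) * (ennreal (exp (-u)) * \<Theta> (0 + u*z) u * indicator {0..} u))
            = ennreal (u * exp (-u) * exp (-(u*z))) * indicator {0..} u * (\<Theta> z 1 * indicator {0..} z)"
          proof (cases "z \<ge> 0")
            case True2: True
            have "ennreal (u * exp (-u) * exp (-(u*z))) = ennreal \<bar>u\<bar> * ennreal (exp (-(0 + u*z))) * ennreal (exp (-u))"
              using True by (simp add: ennreal_mult[symmetric] mult_ac)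
            then show ?thesis using True True2 hom[OF True True2] by (simp add: indicator_def mult_ac)
          next
            case False
            then show ?thesis using True by (simp add: indicator_def zero_le_mult_iff)
          qed
        qed
        finally show ?thesis .
      qed
    qed
  qed
  also have "\<dots> = (\<integral>\<^sup>+z. \<integral>\<^sup>+u. ennreal (u * exp (-u) * exp (-(u*z))) * indicator {0..} u * (\<Theta> z 1 * indicator {0..} z) \<partial>lborel \<partial>lborel)"
    by (rule lborel_pair.Fubini') measurable
  also have "\<dots> = (\<integral>\<^sup>+z. \<Theta> z 1 * ennreal (1 / (1 + z)\<^sup>2) * indicator {0..} z \<partial>lborel)"
  proof (rule nn_integral_cong)
    fix z :: real
    show "(\<integral>\<^sup>+u. ennreal (u * exp (-u) * exp (-(u*z))) * indicator {0..} u * (\<Theta> z 1 * indicator {0..} z) \<partial>lborel)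
       = \<Theta> z 1 * ennreal (1 / (1 + z)\<^sup>2) * indicator {0..} z"
    proof (cases "z \<ge> 0")
      case False then show ?thesis by (simp add: indicator_def)
    next
      case True
      have "(\<integral>\<^sup>+u. ennreal (u * exp (-u) * exp (-(u*z))) * indicator {0..} u * (\<Theta> z 1 * indicator {0..} z) \<partial>lborel)
         = (\<integral>\<^sup>+u. ennreal (u * exp (-(u * (1 + z)))) * indicator {0..} u \<partial>lborel) * (\<Theta> z 1 * indicator {0..} z)"
      proof -
        have ee: "u * exp (-u) * exp (-(u*z)) = u * exp (-(u * (1 + z)))" for u
          by (simp add: exp_add[symmetric] algebra_simps)
        show ?thesis by (subst nn_integral_multc[symmetric]) (auto intro!: nn_integral_cong simp: ee)
      qed
      also have "\<dots> = \<Theta> z 1 * ennreal (1 / (1 + z)\<^sup>2) * indicator {0..} z"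
        using int_u_exp[OF True] by (simp add: mult_ac)
      finally show ?thesis .
    qed
  qed
  finally show ?thesis .
qed


lemma poch_ratio: "b > 0 \<Longrightarrow> pochhammer (b::real) n / pochhammer (b + 1) n = b / (b + real n)"
proof (induction n)
  case 0 then show ?case by simp
next
  case (Suc n)
  have "pochhammer b (Suc n) / pochhammer (b + 1) (Suc n) = (pochhammer b n / pochhammer (b + 1) n) * ((b + n) / (b + 1 + n))"
    by (simp add: pochhammer_Suc)
  also have "\<dots> = b / (b + n) * ((b + n) / (b + 1 + n))" using Suc by simp
  also have "\<dots> = b / (b + 1 + n)"
  proof -
    have "b + real n \<noteq> 0" using Suc.prems by simp
    then show ?thesis by simp
  qed
  also have "\<dots> = b / (b + real (Suc n))" by (simp add: add_ac)
  finally show ?case .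
qed

lemma hyp_sums:
  assumes b: "b > 0" and z: "\<bar>z\<bar> < 1"
  shows "(\<lambda>n. b / (b + real n) * z ^ n) sums hyp2f1 1 b (b + 1) z"
proof -
  have eq: "pochhammer 1 n * pochhammer b n / (pochhammer (b+1) n * fact n) * z ^ n = b / (b + real n) * z ^ n" for n
    using poch_ratio[OF b, of n] by (simp add: pochhammer_fact[symmetric])
  have sm: "summable (\<lambda>n. b / (b + real n) * z ^ n)"
  proof (rule summable_comparison_test')
    show "summable (\<lambda>n. \<bar>z\<bar> ^ n)" using z by simp
    show "norm (b / (b + real n) * z ^ n) \<le> \<bar>z\<bar> ^ n" for n
    proof -
      have "b * \<bar>z\<bar>^n \<le> (b + real n) * \<bar>z\<bar>^n" by (intro mult_right_mono) auto
      then show ?thesis using b by (simp add: abs_mult power_abs divide_le_eq mult.commute)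
    qed
  qed
  then show ?thesis unfolding hyp2f1_def eq by (simp add: summable_sums)
qed

definition Kf :: "real \<Rightarrow> real \<Rightarrow> real" where
  "Kf s y = (\<Sum>n. (real n + 1) * y powr (real n + s + 1) / (real n + s + 1))"

lemma Kf_sums:
  assumes s: "s > 0" and y: "0 < y" "y < 1"
  shows "(\<lambda>n. (real n + 1) * y powr (real n + s + 1) / (real n + s + 1)) sums Kf s y"
    and "(\<lambda>n. (real n + 1) * y ^ n / (real n + s + 1)) sums (Kf s y / y powr (s + 1))"
proof -
  have t: "(real n + 1) * y powr (real n + s + 1) / (real n + s + 1) = y powr (s + 1) * ((real n + 1) * y ^ n / (real n + s + 1))" for n
    using y by (simp add: powr_add powr_realpow add.commute add.left_commute mult_ac)
  have sm: "summable (\<lambda>n. (real n + 1) * y ^ n / (real n + s + 1))"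
  proof (rule summable_comparison_test')
    show "summable (\<lambda>n. of_nat (Suc n) * y ^ n)" using geometric_deriv_sums[of y] y by (auto simp: sums_iff)
    show "norm ((real n + 1) * y ^ n / (real n + s + 1)) \<le> of_nat (Suc n) * y ^ n" for n
      using s y by (auto simp: field_simps)
  qed
  then have sm2: "summable (\<lambda>n. (real n + 1) * y powr (real n + s + 1) / (real n + s + 1))"
    unfolding t by (rule summable_mult)
  then show "(\<lambda>n. (real n + 1) * y powr (real n + s + 1) / (real n + s + 1)) sums Kf s y"
    unfolding Kf_def by (simp add: summable_sums)
  have "Kf s y = y powr (s + 1) * (\<Sum>n. (real n + 1) * y ^ n / (real n + s + 1))"
    unfolding Kf_def t using sm by (rule suminf_mult)
  then show "(\<lambda>n. (real n + 1) * y ^ n / (real n + s + 1)) sums (Kf s y / y powr (s + 1))"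
    using sm y by (simp add: summable_sums)
qed

lemma Kf_identity:
  assumes s: "s > 0" and z: "0 < z" "z < 1"
  shows "Kf s z / z powr (s + 1) = hyp2f1 1 (s+1) (s+2) z / (s+1) + z / (1 - z) - (s+1)/(s+2) * z * hyp2f1 1 (s+2) (s+3) z"
proof -
  define F1 where "F1 = hyp2f1 1 (s+1) (s+2) z"
  define F2 where "F2 = hyp2f1 1 (s+2) (s+3) z"
  have za: "\<bar>z\<bar> < 1" using z by simp
  have hA: "(\<lambda>n. (s+1) / ((s+1) + real n) * z^n) sums F1"
    using hyp_sums[of "s+1" z] s za unfolding F1_def by (simp add: add.assoc)
  have hB: "(\<lambda>n. (s+2) / ((s+2) + real n) * z^n) sums F2"
    using hyp_sums[of "s+2" z] s za unfolding F2_def by (simp add: add.assoc)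
  have g: "(\<lambda>n. z^n) sums (1 / (1 - z))" by (rule geometric_sums) (use za in simp)
  have hC: "(\<lambda>n. z * z^n) sums (z * (1 / (1 - z)))" by (rule sums_mult[OF g])
  have A: "(\<lambda>n. z^n / (s + 1 + real n)) sums (F1 / (s+1))"
  proof -
    have "(\<lambda>n. (s+1) / ((s+1) + real n) * z^n / (s+1)) sums (F1 / (s+1))" by (rule sums_divide[OF hA])
    moreover have "(s+1) / ((s+1) + real n) * z^n / (s+1) = z^n / (s + 1 + real n)" for n using s by simp
    ultimately show ?thesis by simp
  qed
  have B: "(\<lambda>n. (s+1) * (z * z^n / (s + 2 + real n))) sums ((s+1) * (z * F2 / (s+2)))"
  proof -
    have 1: "(\<lambda>n. (z / (s+2)) * ((s+2) / ((s+2) + real n) * z^n)) sums ((z / (s+2)) * F2)" by (rule sums_mult[OF hB])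
    have eqf: "(\<lambda>n. (z / (s+2)) * ((s+2) / ((s+2) + real n) * z^n)) = (\<lambda>n. z * z^n / (s + 2 + real n))"
      using s by (auto simp: fun_eq_iff)
    have "(\<lambda>n. z * z^n / (s + 2 + real n)) sums (z * F2 / (s+2))" using 1 unfolding eqf by simp
    then show ?thesis by (rule sums_mult)
  qed
  define E where "E = (\<lambda>m::nat. real m * z^m / (s + 1 + real m))"
  have D: "(\<lambda>n. E (Suc n)) sums (z * (1 / (1 - z)) - (s+1) * (z * F2 / (s+2)))"
  proof -
    have "(\<lambda>n. z * z^n - (s+1) * (z * z^n / (s + 2 + real n))) sums (z * (1 / (1 - z)) - (s+1) * (z * F2 / (s+2)))"
      by (rule sums_diff[OF hC B])
    moreover have "z * z^n - (s+1) * (z * z^n / (s + 2 + real n)) = E (Suc n)" for n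
      unfolding E_def using s by (simp add: field_simps)
    ultimately show ?thesis by simp
  qed
  then have E: "E sums (z * (1 / (1 - z)) - (s+1) * (z * F2 / (s+2)))"
    by (subst (asm) sums_Suc_iff) (simp add: E_def)
  have T: "(\<lambda>n. z^n / (s + 1 + real n) + E n) sums (F1 / (s+1) + (z * (1 / (1 - z)) - (s+1) * (z * F2 / (s+2))))"
    by (rule sums_add[OF A E])
  moreover have "z^n / (s + 1 + real n) + E n = (real n + 1) * z ^ n / (real n + s + 1)" for n
    unfolding E_def by (simp add: add_divide_distrib[symmetric] algebra_simps)
  ultimately have "(\<lambda>n. (real n + 1) * z ^ n / (real n + s + 1)) sums (F1 / (s+1) + (z * (1 / (1 - z)) - (s+1) * (z * F2 / (s+2))))"
    by simp
  moreover have "(\<lambda>n. (real n + 1) * z ^ n / (real n + s + 1)) sums (Kf s z / z powr (s + 1))"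
    by (rule Kf_sums(2)[OF s z])
  ultimately have "Kf s z / z powr (s + 1) = F1 / (s+1) + (z * (1 / (1 - z)) - (s+1) * (z * F2 / (s+2)))"
    using sums_unique2 by blast
  then show ?thesis unfolding F1_def F2_def by simp
qed

lemma G_fun_Kf:
  assumes a: "\<alpha> > 0" and z: "0 < z" "z < 1"
  shows "G_fun (2 * z) \<alpha> = Gamma (2/\<alpha> + 1) * 2 powr (2/\<alpha> - 1) * Kf (2/\<alpha>) z"
proof -
  define s where "s = 2/\<alpha>"
  have s: "s > 0" unfolding s_def using a by simp
  have al: "\<alpha> = 2 / s" unfolding s_def using a by simp
  have e1: "\<alpha> / (\<alpha> + 2) = 1 / (s + 1)" unfolding al using s by (simp add: field_simps)
  have e2: "\<alpha> * (2 * z) / (4 * (\<alpha> + 1)) = z / (s + 2)" unfolding al using s by (simp add: field_simps)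
  have e3: "Gamma (s + 2) = (s + 1) * Gamma (s + 1)"
  proof -
    have "s + 1 \<notin> \<int>\<^sub>\<le>\<^sub>0" using s by (auto elim!: nonpos_Ints_cases)
    then show ?thesis using Gamma_plus1[of "s + 1"] by (simp add: add.assoc)
  qed
  have e4: "(2 * z) powr (s + 1) / 4 = 2 powr (s - 1) * z powr (s + 1)"
  proof -
    have "(2 * z) powr (s + 1) = 2 powr (s + 1) * z powr (s + 1)" using z by (simp add: powr_mult)
    moreover have "2 powr (s + 1) = 2 powr (s - 1) * 4"
      using powr_add[of 2 "s - 1" 2] by (simp add: add.commute)
    ultimately show ?thesis by simp
  qed
  have e5: "2 * z / (2 - 2 * z) = z / (1 - z)" using z by (simp add: field_simps)
  have zp: "z powr (s + 1) > 0" using z by simp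
  have KI: "Kf s z = z powr (s + 1) * (hyp2f1 1 (s+1) (s+2) z / (s+1) + z / (1 - z) - (s+1)/(s+2) * z * hyp2f1 1 (s+2) (s+3) z)"
    using Kf_identity[OF s z] zp by (simp add: field_simps)
  have "G_fun (2 * z) \<alpha> = (2 * z) powr (s + 1) / 4 *
     (Gamma (s + 1) * (2 * z / (2 - 2 * z) + \<alpha> / (\<alpha> + 2) * hyp2f1 1 (s + 1) (s + 2) z)
      - \<alpha> * (2 * z) / (4 * (\<alpha> + 1)) * Gamma (s + 2) * hyp2f1 1 (s + 2) (s + 3) z)"
    unfolding G_fun_def s_def by simp
  also have "\<dots> = 2 powr (s - 1) * z powr (s + 1) *
     (Gamma (s + 1) * (z / (1 - z) + 1 / (s + 1) * hyp2f1 1 (s + 1) (s + 2) z)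
      - z / (s + 2) * ((s + 1) * Gamma (s + 1)) * hyp2f1 1 (s + 2) (s + 3) z)"
    unfolding e1 e2 e3 e4 e5 ..
  also have "\<dots> = Gamma (s + 1) * 2 powr (s - 1) * Kf s z"
    unfolding KI by (simp add: algebra_simps add_divide_distrib)
  finally show ?thesis unfolding s_def .
qed

lemma int_ys:
  assumes s: "s > 0" and ab: "0 < a" "a \<le> b" "b < 1"
  shows "(\<integral>\<^sup>+y. ennreal (y powr s / (1 - y)\<^sup>2) * indicator {a..b} y \<partial>lborel) = ennreal (Kf s b - Kf s a)"
proof -
  define t where "t = (\<lambda>n::nat. (real n + 1) * (b powr (real n + s + 1) - a powr (real n + s + 1)) / (real n + s + 1))"
  have tsum: "t sums (Kf s b - Kf s a)"
  proof -
    have "(\<lambda>n. (real n + 1) * b powr (real n + s + 1) / (real n + s + 1) - (real n + 1) * a powr (real n + s + 1) / (real n + s + 1)) sums (Kf s b - Kf s a)"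
      using Kf_sums(1)[OF s, of b] Kf_sums(1)[OF s, of a] ab by (intro sums_diff) auto
    moreover have "(\<lambda>n. (real n + 1) * b powr (real n + s + 1) / (real n + s + 1) - (real n + 1) * a powr (real n + s + 1) / (real n + s + 1)) = t"
      unfolding t_def by (auto simp: fun_eq_iff diff_divide_distrib right_diff_distrib)
    ultimately show ?thesis by simp
  qed
  have pt: "ennreal (y powr s / (1 - y)\<^sup>2) * indicator {a..b} y = (\<Sum>n. ennreal ((real n + 1) * y powr (real n + s)) * indicator {a..b} y)" for y
  proof (cases "y \<in> {a..b}")
    case True
    then have y: "0 < y" "y < 1" using ab by auto
    have g: "(\<lambda>n. of_nat (Suc n) * y ^ n) sums (1 / (1 - y)^2)" by (rule geometric_deriv_sums) (use y in simp)
    have "(\<lambda>n. y powr s * (of_nat (Suc n) * y ^ n)) sums (y powr s * (1 / (1 - y)^2))" by (rule sums_mult[OF g])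
    moreover have "y powr s * (of_nat (Suc n) * y ^ n) = (real n + 1) * y powr (real n + s)" for n
      using y by (simp add: powr_add powr_realpow mult_ac)
    ultimately have "(\<lambda>n. (real n + 1) * y powr (real n + s)) sums (y powr s / (1 - y)\<^sup>2)" by simp
    then have "(\<Sum>n. ennreal ((real n + 1) * y powr (real n + s))) = ennreal (y powr s / (1 - y)\<^sup>2)"
      by (rule suminf_ennreal_eq[rotated]) simp
    then show ?thesis using True by simp
  next
    case False then show ?thesis by simp
  qed
  have "(\<integral>\<^sup>+y. ennreal (y powr s / (1 - y)\<^sup>2) * indicator {a..b} y \<partial>lborel)
      = (\<integral>\<^sup>+y. (\<Sum>n. ennreal ((real n + 1) * y powr (real n + s)) * indicator {a..b} y) \<partial>lborel)"
    by (simp only: pt)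
  also have "\<dots> = (\<Sum>n. \<integral>\<^sup>+y. ennreal ((real n + 1) * y powr (real n + s)) * indicator {a..b} y \<partial>lborel)"
    by (rule nn_integral_suminf) measurable
  also have "\<dots> = (\<Sum>n. ennreal (t n))"
  proof (rule suminf_cong)
    fix n
    have "(\<integral>\<^sup>+y. ennreal ((real n + 1) * y powr (real n + s)) * indicator {a..b} y \<partial>lborel)
      = ennreal ((\<lambda>y. (real n + 1) * y powr (real n + s + 1) / (real n + s + 1)) b - (\<lambda>y. (real n + 1) * y powr (real n + s + 1) / (real n + s + 1)) a)"
    proof (rule nn_integral_FTC_Icc)
      show "(\<lambda>y. (real n + 1) * y powr (real n + s)) \<in> borel_measurable borel" by measurable
      fix y assume y: "y \<in> {a..b}"
      then have y0: "y > 0" using ab by auto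
      show "((\<lambda>y. (real n + 1) * y powr (real n + s + 1) / (real n + s + 1)) has_real_derivative (real n + 1) * y powr (real n + s)) (at y)"
      proof -
        have d: "((\<lambda>y. y powr (real n + s + 1)) has_real_derivative (real n + s + 1) * y powr (real n + s + 1 - 1)) (at y)"
          using y0 by (rule has_real_derivative_powr)
        have "((\<lambda>y. (real n + 1) * y powr (real n + s + 1) / (real n + s + 1)) has_real_derivative (real n + 1) * ((real n + s + 1) * y powr (real n + s + 1 - 1)) / (real n + s + 1)) (at y)"
          by (intro DERIV_cdivide DERIV_cmult d)
        moreover have "(real n + 1) * ((real n + s + 1) * y powr (real n + s + 1 - 1)) / (real n + s + 1) = (real n + 1) * y powr (real n + s)"
          using s by (simp add: add_pos_nonneg)
        ultimately show ?thesis by simp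
      qed
      show "0 \<le> (real n + 1) * y powr (real n + s)" by simp
    qed (use ab in simp)
    then show "(\<integral>\<^sup>+y. ennreal ((real n + 1) * y powr (real n + s)) * indicator {a..b} y \<partial>lborel) = ennreal (t n)"
      unfolding t_def by (simp add: diff_divide_distrib right_diff_distrib)
  qed
  also have "(\<Sum>n. ennreal (t n)) = ennreal (Kf s b - Kf s a)"
  proof (rule suminf_ennreal_eq[OF _ tsum])
    fix n
    have "a powr (real n + s + 1) \<le> b powr (real n + s + 1)" by (rule powr_mono2) (use ab s in auto)
    then have "0 \<le> b powr (real n + s + 1) - a powr (real n + s + 1)" by simp
    moreover have "0 < real n + s + 1" using s by simp
    ultimately show "0 \<le> t n" unfolding t_def by (intro divide_nonneg_pos mult_nonneg_nonneg) auto
  qed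
  finally show ?thesis .
qed


lemma SUP_ind_lemma2:
  fixes f :: "real \<Rightarrow> ennreal" and b :: "nat \<Rightarrow> real"
  assumes [measurable]: "f \<in> borel_measurable borel" and mb: "mono b" and bL: "\<And>n. b n < L"
    and ub: "\<And>y. y < L \<Longrightarrow> \<exists>n. y \<le> b n"
  shows "(\<integral>\<^sup>+x. f x * indicator {a..<L} x \<partial>lborel) = (SUP n. \<integral>\<^sup>+x. f x * indicator {a..b n} x \<partial>lborel)"
proof -
  have inc: "incseq (\<lambda>n x. f x * indicator {a..b n} x)"
  proof (rule incseq_SucI, rule le_funI)
    fix n x
    have "b n \<le> b (Suc n)" using mb by (simp add: monoD)
    then show "f x * indicator {a..b n} x \<le> f x * indicator {a..b (Suc n)} x"
      by (intro mult_left_mono) (auto simp: indicator_def)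
  qed
  have pt: "(SUP n. f x * indicator {a..b n} x) = f x * indicator {a..<L} x" for x
  proof (cases "a \<le> x \<and> x < L")
    case True
    obtain n where n: "x \<le> b n" using ub True by blast
    show ?thesis
    proof (rule antisym)
      show "(SUP n. f x * indicator {a..b n} x) \<le> f x * indicator {a..<L} x"
        by (rule SUP_least) (intro mult_left_mono, auto simp: indicator_def dest: order.strict_trans1[OF _ bL])
      have "f x * indicator {a..<L} x = f x * indicator {a..b n} x" using True n by (simp add: indicator_def)
      also have "\<dots> \<le> (SUP n. f x * indicator {a..b n} x)" by (rule SUP_upper) (rule UNIV_I)
      finally show "f x * indicator {a..<L} x \<le> (SUP n. f x * indicator {a..b n} x)" .
    qed
  next
    case False
    have "\<not> (a \<le> x \<and> x \<le> b n)" for n using False bL[of n] by auto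
    then have z: "f x * indicator {a..b n} x = 0" for n by (simp add: indicator_def)
    show ?thesis using False by (simp only: z) (simp add: indicator_def)
  qed
  have "(\<integral>\<^sup>+x. f x * indicator {a..<L} x \<partial>lborel) = (\<integral>\<^sup>+x. (SUP n. f x * indicator {a..b n} x) \<partial>lborel)"
    by (intro nn_integral_cong) (rule pt[symmetric])
  also have "\<dots> = (SUP n. \<integral>\<^sup>+x. f x * indicator {a..b n} x \<partial>lborel)"
    by (rule nn_integral_monotone_convergence_SUP[OF inc]) measurable
  finally show ?thesis .
qed

lemma subst_z:
  fixes \<rho> s :: real
  assumes r: "0 < \<rho>" "\<rho> < 1" and s: "s > 0"
  defines "l1 \<equiv> 1 + \<rho>" and "l2 \<equiv> 1 - \<rho>"
  shows "(\<integral>\<^sup>+z. ennreal (((l1\<^sup>2 * z + l2\<^sup>2) / (l1 * z + l2)) powr s) * ennreal (1 / (1 + z)\<^sup>2) * indicator {0..} z \<partial>lborel)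
     = ennreal ((1 - \<rho>\<^sup>2) / (4 * \<rho>) * 2 powr s) * (\<integral>\<^sup>+y. ennreal (y powr s / (1 - y)\<^sup>2) * indicator {l2/2..l1/2} y \<partial>lborel)"
proof -
  define L where "L = l1 / 2"
  define \<kappa> where "\<kappa> = (1 - \<rho>) * \<rho>"
  define C where "C = (1 - \<rho>\<^sup>2) / (4 * \<rho>)"
  define \<phi> where "\<phi> = (\<lambda>z. L - \<kappa> / (l1 * z + l2))"
  define \<phi>' where "\<phi>' = (\<lambda>z. \<kappa> * l1 / (l1 * z + l2)\<^sup>2)"
  define f where "f = (\<lambda>y. ennreal (C * (2 * y) powr s / (1 - y)\<^sup>2))"
  have l1: "l1 > 0" and l2: "l2 > 0" and ka: "\<kappa> > 0"
    using r unfolding l1_def l2_def \<kappa>_def by auto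
  have "\<rho> * \<rho> < 1 * 1" using r by (intro mult_strict_mono) auto
  then have C: "C > 0" unfolding C_def using r by (simp add: power2_eq_square)
  have D: "l1 * z + l2 > 0" if "z \<ge> 0" for z using l1 l2 that by (simp add: add_nonneg_pos)
  have [measurable]: "f \<in> borel_measurable borel" unfolding f_def by measurable
  have phi0: "\<phi> 0 = l2 / 2" unfolding \<phi>_def L_def \<kappa>_def l1_def l2_def using r by (simp add: field_simps)
  have key: "f (\<phi> z) * ennreal (\<phi>' z) = ennreal (((l1\<^sup>2 * z + l2\<^sup>2) / (l1 * z + l2)) powr s) * ennreal (1 / (1 + z)\<^sup>2)" if z: "z \<ge> 0" for z
  proof -
    define d where "d = l1 * z + l2"
    have d: "d > 0" unfolding d_def using D[OF z] .
    have e1: "2 * \<phi> z = (l1\<^sup>2 * z + l2\<^sup>2) / d"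
      unfolding \<phi>_def L_def \<kappa>_def d_def using d unfolding d_def l1_def l2_def by (simp add: field_simps power2_eq_square)
    have e2: "1 - \<phi> z = l1 * l2 * (1 + z) / (2 * d)"
      unfolding \<phi>_def L_def \<kappa>_def d_def using d unfolding d_def l1_def l2_def by (simp add: field_simps)
    have e3: "\<phi>' z = \<kappa> * l1 / d\<^sup>2" unfolding \<phi>'_def d_def ..
    have "C * (2 * \<phi> z) powr s / (1 - \<phi> z)\<^sup>2 * \<phi>' z = ((l1\<^sup>2 * z + l2\<^sup>2) / d) powr s * (C * \<kappa> * l1 * 4 / (l1 * l2 * (1 + z))\<^sup>2)"
      unfolding e1 e2 e3 using d z l1 l2 by (simp add: field_simps power2_eq_square)
    also have "C * \<kappa> * l1 * 4 / (l1 * l2 * (1 + z))\<^sup>2 = 1 / (1 + z)\<^sup>2"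
    proof -
      have "C * \<kappa> * l1 * 4 = (l1 * l2)\<^sup>2"
        unfolding C_def \<kappa>_def l1_def l2_def using r by (simp add: field_simps power2_eq_square)
      moreover have "(l1 * l2)\<^sup>2 / (l1 * l2 * (1 + z))\<^sup>2 = 1 / (1 + z)\<^sup>2"
        using l1 l2 z by (simp add: power_mult_distrib)
      ultimately show ?thesis by simp
    qed
    finally have "C * (2 * \<phi> z) powr s / (1 - \<phi> z)\<^sup>2 * \<phi>' z = ((l1\<^sup>2 * z + l2\<^sup>2) / d) powr s * (1 / (1 + z)\<^sup>2)" .
    moreover have "0 \<le> C * (2 * \<phi> z) powr s / (1 - \<phi> z)\<^sup>2" using C by simp
    moreover have "0 \<le> \<phi>' z" unfolding \<phi>'_def using ka l1 by simp
    ultimately show ?thesis unfolding f_def d_def by (simp add: ennreal_mult[symmetric])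
  qed
  define b where "b = (\<lambda>n::nat. real n + 1)"
  have mb: "mono b" unfolding b_def by (simp add: mono_def)
  have ub: "\<exists>n. x \<le> b n" for x
  proof -
    obtain n where "x \<le> real n" using real_arch_simple by blast
    then show ?thesis unfolding b_def by (intro exI[of _ n]) simp
  qed
  have mphi: "mono (\<lambda>n. \<phi> (b n))"
  proof (rule monoI)
    fix m n :: nat assume "m \<le> n"
    then have 1: "l1 * b m + l2 \<le> l1 * b n + l2" unfolding b_def using l1 by simp
    have 2: "0 < l1 * b m + l2" unfolding b_def using l1 l2 by (simp add: add_pos_pos)
    have "\<kappa> / (l1 * b n + l2) \<le> \<kappa> / (l1 * b m + l2)"
      using ka 1 2 by (intro divide_left_mono) (auto intro!: mult_pos_pos)
    then show "\<phi> (b m) \<le> \<phi> (b n)" unfolding \<phi>_def by simp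
  qed
  have phiL: "\<phi> (b n) < L" for n unfolding \<phi>_def b_def using ka l1 l2 by (simp add: add_pos_nonneg)
  have phiub: "\<exists>n. y \<le> \<phi> (b n)" if "y < L" for y
  proof -
    obtain n where n: "\<kappa> / (l1 * (L - y)) \<le> real n" using real_arch_simple by blast
    have Ly: "L - y > 0" using that by simp
    have "\<kappa> / (l1 * b n + l2) \<le> L - y"
    proof -
      have "\<kappa> \<le> (L - y) * (l1 * real n)" using n Ly l1 by (simp add: field_simps)
      also have "\<dots> \<le> (L - y) * (l1 * b n + l2)" unfolding b_def using Ly l1 l2 by (intro mult_left_mono) (auto simp: distrib_left)
      finally show ?thesis using Ly l1 l2 unfolding b_def by (simp add: divide_le_eq add_pos_nonneg)
    qed
    then show ?thesis unfolding \<phi>_def by (intro exI[of _ n]) simp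
  qed
  have step: "(\<integral>\<^sup>+z. ennreal (((l1\<^sup>2 * z + l2\<^sup>2) / (l1 * z + l2)) powr s) * ennreal (1 / (1 + z)\<^sup>2) * indicator {0..b n} z \<partial>lborel)
      = (\<integral>\<^sup>+y. f y * indicator {l2/2..\<phi> (b n)} y \<partial>lborel)" for n
  proof -
    have "(\<integral>\<^sup>+y. f y * indicator {\<phi> 0..\<phi> (b n)} y \<partial>lborel) = (\<integral>\<^sup>+z. f (\<phi> z) * ennreal (\<phi>' z) * indicator {0..b n} z \<partial>lborel)"
    proof (rule nn_integral_substitution_aux)
      show "0 < b n" unfolding b_def by simp
      fix z assume z: "z \<in> {0..b n}"
      then have "l1 * z + l2 > 0" using D by auto
      then show "(\<phi> has_real_derivative \<phi>' z) (at z)"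
        unfolding \<phi>_def \<phi>'_def by (auto intro!: derivative_eq_intros simp: power2_eq_square field_simps)
      show "0 \<le> \<phi>' z" unfolding \<phi>'_def using ka l1 by simp
    next
      show "continuous_on {0..b n} \<phi>'" unfolding \<phi>'_def using D
        by (intro continuous_intros) (use D in \<open>fastforce simp: power2_eq_square\<close>)
    qed (auto simp: f_def)
    also have "\<dots> = (\<integral>\<^sup>+z. ennreal (((l1\<^sup>2 * z + l2\<^sup>2) / (l1 * z + l2)) powr s) * ennreal (1 / (1 + z)\<^sup>2) * indicator {0..b n} z \<partial>lborel)"
      by (intro nn_integral_cong) (auto simp: indicator_def key)
    finally show ?thesis unfolding phi0 by simp
  qed
  have "(\<integral>\<^sup>+z. ennreal (((l1\<^sup>2 * z + l2\<^sup>2) / (l1 * z + l2)) powr s) * ennreal (1 / (1 + z)\<^sup>2) * indicator {0..} z \<partial>lborel)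
      = (SUP n. \<integral>\<^sup>+z. ennreal (((l1\<^sup>2 * z + l2\<^sup>2) / (l1 * z + l2)) powr s) * ennreal (1 / (1 + z)\<^sup>2) * indicator {0..b n} z \<partial>lborel)"
    by (rule SUP_ind_lemma[OF _ mb ub]) measurable
  also have "\<dots> = (SUP n. \<integral>\<^sup>+y. f y * indicator {l2/2..\<phi> (b n)} y \<partial>lborel)" by (simp only: step)
  also have "\<dots> = (\<integral>\<^sup>+y. f y * indicator {l2/2..<L} y \<partial>lborel)"
    by (rule SUP_ind_lemma2[symmetric, OF _ mphi phiL phiub]) measurable
  also have "\<dots> = (\<integral>\<^sup>+y. f y * indicator {l2/2..L} y \<partial>lborel)"
    by (rule nn_integral_cong_AE) (use AE_lborel_singleton[of L] in \<open>auto elim!: eventually_mono simp: indicator_def\<close>)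
  also have "\<dots> = (\<integral>\<^sup>+y. ennreal (C * 2 powr s) * (ennreal (y powr s / (1 - y)\<^sup>2) * indicator {l2/2..L} y) \<partial>lborel)"
  proof (rule nn_integral_cong)
    fix y :: real
    show "f y * indicator {l2/2..L} y = ennreal (C * 2 powr s) * (ennreal (y powr s / (1 - y)\<^sup>2) * indicator {l2/2..L} y)"
    proof (cases "y \<in> {l2/2..L}")
      case True
      then have "y > 0" using l2 by auto
      then have "C * (2 * y) powr s / (1 - y)\<^sup>2 = (C * 2 powr s) * (y powr s / (1 - y)\<^sup>2)" by (simp add: powr_mult)
      then show ?thesis using True C unfolding f_def by (simp add: ennreal_mult[symmetric])
    qed simp
  qed
  also have "\<dots> = ennreal (C * 2 powr s) * (\<integral>\<^sup>+y. ennreal (y powr s / (1 - y)\<^sup>2) * indicator {l2/2..L} y \<partial>lborel)"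
    by (rule nn_integral_cmult) measurable
  finally show ?thesis unfolding C_def L_def .
qed


interpretation G2: prob_space "G \<Otimes>\<^sub>M G" by (rule GG.P.prob_space_axioms)
interpretation GG2: pair_prob_space "G \<Otimes>\<^sub>M G" "G \<Otimes>\<^sub>M G" by standard
interpretation G4: prob_space "(G \<Otimes>\<^sub>M G) \<Otimes>\<^sub>M (G \<Otimes>\<^sub>M G)" by (rule GG2.P.prob_space_axioms)

lemma int_G2:
  assumes [measurable]: "f \<in> borel_measurable (G \<Otimes>\<^sub>M G)"
  shows "(\<integral>\<^sup>+p. f p \<partial>(G \<Otimes>\<^sub>M G)) = (\<integral>\<^sup>+x. \<integral>\<^sup>+y. f (x, y) \<partial>G \<partial>G)"
  by (rule G.nn_integral_fst[symmetric]) measurable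

lemma int_G4:
  assumes [measurable]: "f \<in> borel_measurable ((G \<Otimes>\<^sub>M G) \<Otimes>\<^sub>M (G \<Otimes>\<^sub>M G))"
  shows "(\<integral>\<^sup>+p. f p \<partial>((G \<Otimes>\<^sub>M G) \<Otimes>\<^sub>M (G \<Otimes>\<^sub>M G))) = (\<integral>\<^sup>+x1. \<integral>\<^sup>+x2. \<integral>\<^sup>+x3. \<integral>\<^sup>+x4. f ((x1, x2), (x3, x4)) \<partial>G \<partial>G \<partial>G \<partial>G)"
proof -
  have "(\<integral>\<^sup>+p. f p \<partial>((G \<Otimes>\<^sub>M G) \<Otimes>\<^sub>M (G \<Otimes>\<^sub>M G))) = (\<integral>\<^sup>+p. \<integral>\<^sup>+q. f (p, q) \<partial>(G \<Otimes>\<^sub>M G) \<partial>(G \<Otimes>\<^sub>M G))"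
    by (rule GG.P.nn_integral_fst[symmetric]) measurable
  also have "\<dots> = (\<integral>\<^sup>+x1. \<integral>\<^sup>+x2. (\<integral>\<^sup>+q. f ((x1, x2), q) \<partial>(G \<Otimes>\<^sub>M G)) \<partial>G \<partial>G)"
    by (rule int_G2) measurable
  also have "\<dots> = (\<integral>\<^sup>+x1. \<integral>\<^sup>+x2. \<integral>\<^sup>+x3. \<integral>\<^sup>+x4. f ((x1, x2), (x3, x4)) \<partial>G \<partial>G \<partial>G \<partial>G)"
    by (intro nn_integral_cong int_G2) measurable
  finally show ?thesis .
qed

lemma int_G8:
  assumes [measurable]: "f \<in> borel_measurable (((G \<Otimes>\<^sub>M G) \<Otimes>\<^sub>M (G \<Otimes>\<^sub>M G)) \<Otimes>\<^sub>M ((G \<Otimes>\<^sub>M G) \<Otimes>\<^sub>M (G \<Otimes>\<^sub>M G)))"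
  shows "(\<integral>\<^sup>+p. f p \<partial>(((G \<Otimes>\<^sub>M G) \<Otimes>\<^sub>M (G \<Otimes>\<^sub>M G)) \<Otimes>\<^sub>M ((G \<Otimes>\<^sub>M G) \<Otimes>\<^sub>M (G \<Otimes>\<^sub>M G))))
    = (\<integral>\<^sup>+x1. \<integral>\<^sup>+x2. \<integral>\<^sup>+x3. \<integral>\<^sup>+x4. \<integral>\<^sup>+x5. \<integral>\<^sup>+x6. \<integral>\<^sup>+x7. \<integral>\<^sup>+x8. f (((x1, x2), (x3, x4)), ((x5, x6), (x7, x8))) \<partial>G \<partial>G \<partial>G \<partial>G \<partial>G \<partial>G \<partial>G \<partial>G)"
proof -
  have "(\<integral>\<^sup>+p. f p \<partial>(((G \<Otimes>\<^sub>M G) \<Otimes>\<^sub>M (G \<Otimes>\<^sub>M G)) \<Otimes>\<^sub>M ((G \<Otimes>\<^sub>M G) \<Otimes>\<^sub>M (G \<Otimes>\<^sub>M G))))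
     = (\<integral>\<^sup>+p. \<integral>\<^sup>+q. f (p, q) \<partial>((G \<Otimes>\<^sub>M G) \<Otimes>\<^sub>M (G \<Otimes>\<^sub>M G)) \<partial>((G \<Otimes>\<^sub>M G) \<Otimes>\<^sub>M (G \<Otimes>\<^sub>M G)))"
    by (rule GG2.P.nn_integral_fst[symmetric]) measurable
  also have "\<dots> = (\<integral>\<^sup>+x1. \<integral>\<^sup>+x2. \<integral>\<^sup>+x3. \<integral>\<^sup>+x4. (\<integral>\<^sup>+q. f (((x1, x2), (x3, x4)), q) \<partial>((G \<Otimes>\<^sub>M G) \<Otimes>\<^sub>M (G \<Otimes>\<^sub>M G))) \<partial>G \<partial>G \<partial>G \<partial>G)"
    by (rule int_G4) measurable
  also have "\<dots> = (\<integral>\<^sup>+x1. \<integral>\<^sup>+x2. \<integral>\<^sup>+x3. \<integral>\<^sup>+x4. \<integral>\<^sup>+x5. \<integral>\<^sup>+x6. \<integral>\<^sup>+x7. \<integral>\<^sup>+x8. f (((x1, x2), (x3, x4)), ((x5, x6), (x7, x8))) \<partial>G \<partial>G \<partial>G \<partial>G \<partial>G \<partial>G \<partial>G \<partial>G)"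
    by (intro nn_integral_cong int_G4) measurable
  finally show ?thesis .
qed

context prob_space begin

lemma indep_grp:
  fixes X :: "'i \<Rightarrow> 'a \<Rightarrow> real"
  assumes ind: "indep_vars (\<lambda>_. borel) X UNIV" and AB: "A \<inter> B = {}"
    and f: "f \<in> measurable (PiM A (\<lambda>_. borel)) S" and g: "g \<in> measurable (PiM B (\<lambda>_. borel)) T"
  shows "indep_var S (\<lambda>\<omega>. f (\<lambda>i\<in>A. X i \<omega>)) T (\<lambda>\<omega>. g (\<lambda>i\<in>B. X i \<omega>))"
proof -
  have "indep_var (PiM A (\<lambda>_. borel)) (\<lambda>\<omega>. \<lambda>i\<in>A. X i \<omega>) (PiM B (\<lambda>_. borel)) (\<lambda>\<omega>. \<lambda>i\<in>B. X i \<omega>)"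
    by (rule indep_var_restrict[OF ind AB]) auto
  from indep_var_compose[OF this f g] show ?thesis by (simp add: comp_def)
qed

lemma bridge8:
  fixes X :: "'i \<Rightarrow> 'a \<Rightarrow> real"
  assumes ind: "indep_vars (\<lambda>_. borel) X UNIV" and dG: "\<And>k. distr M G (X k) = G"
    and dist: "distinct [k1, k2, k3, k4, k5, k6, k7, k8]"
    and Fm[measurable]: "F \<in> borel_measurable (((G \<Otimes>\<^sub>M G) \<Otimes>\<^sub>M (G \<Otimes>\<^sub>M G)) \<Otimes>\<^sub>M ((G \<Otimes>\<^sub>M G) \<Otimes>\<^sub>M (G \<Otimes>\<^sub>M G)))"
  shows "(\<integral>\<^sup>+\<omega>. F (((X k1 \<omega>, X k2 \<omega>), (X k3 \<omega>, X k4 \<omega>)), ((X k5 \<omega>, X k6 \<omega>), (X k7 \<omega>, X k8 \<omega>))) \<partial>M)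
    = (\<integral>\<^sup>+x1. \<integral>\<^sup>+x2. \<integral>\<^sup>+x3. \<integral>\<^sup>+x4. \<integral>\<^sup>+x5. \<integral>\<^sup>+x6. \<integral>\<^sup>+x7. \<integral>\<^sup>+x8. F (((x1, x2), (x3, x4)), ((x5, x6), (x7, x8))) \<partial>G \<partial>G \<partial>G \<partial>G \<partial>G \<partial>G \<partial>G \<partial>G)"
proof -
  have rv[measurable]: "X k \<in> measurable M G" for k
  proof -
    have "X k \<in> measurable M borel" using ind unfolding indep_vars_def by blast
    then show ?thesis by (simp cong: measurable_cong_sets)
  qed
  have pair: "distr M (G \<Otimes>\<^sub>M G) (\<lambda>\<omega>. (X a \<omega>, X b \<omega>)) = G \<Otimes>\<^sub>M G" if "a \<noteq> b" for a b
  proof -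
    have "indep_var G (\<lambda>\<omega>. (\<lambda>x. x a) (\<lambda>i\<in>{a}. X i \<omega>)) G (\<lambda>\<omega>. (\<lambda>x. x b) (\<lambda>i\<in>{b}. X i \<omega>))"
      by (rule indep_grp[OF ind]) (use that in auto)
    then have "indep_var G (X a) G (X b)" by simp
    then have "distr M G (X a) \<Otimes>\<^sub>M distr M G (X b) = distr M (G \<Otimes>\<^sub>M G) (\<lambda>\<omega>. (X a \<omega>, X b \<omega>))"
      by (simp add: indep_var_distribution_eq)
    then show ?thesis unfolding dG by simp
  qed
  define P2 where "P2 = G \<Otimes>\<^sub>M G"
  have quad: "distr M (P2 \<Otimes>\<^sub>M P2) (\<lambda>\<omega>. ((X a \<omega>, X b \<omega>), (X c \<omega>, X d \<omega>))) = P2 \<Otimes>\<^sub>M P2"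
    if "distinct [a, b, c, d]" for a b c d
  proof -
    have "indep_var P2 (\<lambda>\<omega>. (\<lambda>x. (x a, x b)) (\<lambda>i\<in>{a, b}. X i \<omega>)) P2 (\<lambda>\<omega>. (\<lambda>x. (x c, x d)) (\<lambda>i\<in>{c, d}. X i \<omega>))"
      by (rule indep_grp[OF ind]) (use that in \<open>auto simp: P2_def\<close>)
    then have "indep_var P2 (\<lambda>\<omega>. (X a \<omega>, X b \<omega>)) P2 (\<lambda>\<omega>. (X c \<omega>, X d \<omega>))" by simp
    moreover have "distr M P2 (\<lambda>\<omega>. (X a \<omega>, X b \<omega>)) = P2" "distr M P2 (\<lambda>\<omega>. (X c \<omega>, X d \<omega>)) = P2"
      using pair that unfolding P2_def by auto
    ultimately show ?thesis using indep_var_distribution_eq[of P2 "\<lambda>\<omega>. (X a \<omega>, X b \<omega>)" P2 "\<lambda>\<omega>. (X c \<omega>, X d \<omega>)"] by simp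
  qed
  define P4 where "P4 = P2 \<Otimes>\<^sub>M P2"
  have oct: "distr M (P4 \<Otimes>\<^sub>M P4) (\<lambda>\<omega>. (((X k1 \<omega>, X k2 \<omega>), (X k3 \<omega>, X k4 \<omega>)), ((X k5 \<omega>, X k6 \<omega>), (X k7 \<omega>, X k8 \<omega>)))) = P4 \<Otimes>\<^sub>M P4"
  proof -
    have "indep_var P4 (\<lambda>\<omega>. (\<lambda>x. ((x k1, x k2), (x k3, x k4))) (\<lambda>i\<in>{k1, k2, k3, k4}. X i \<omega>)) P4 (\<lambda>\<omega>. (\<lambda>x. ((x k5, x k6), (x k7, x k8))) (\<lambda>i\<in>{k5, k6, k7, k8}. X i \<omega>))"
      by (rule indep_grp[OF ind]) (use dist in \<open>auto simp: P2_def P4_def\<close>)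
    then have "indep_var P4 (\<lambda>\<omega>. ((X k1 \<omega>, X k2 \<omega>), (X k3 \<omega>, X k4 \<omega>))) P4 (\<lambda>\<omega>. ((X k5 \<omega>, X k6 \<omega>), (X k7 \<omega>, X k8 \<omega>)))" by simp
    moreover have "distr M P4 (\<lambda>\<omega>. ((X k1 \<omega>, X k2 \<omega>), (X k3 \<omega>, X k4 \<omega>))) = P4" "distr M P4 (\<lambda>\<omega>. ((X k5 \<omega>, X k6 \<omega>), (X k7 \<omega>, X k8 \<omega>))) = P4"
      using quad dist unfolding P4_def by auto
    ultimately show ?thesis using indep_var_distribution_eq[of P4 "\<lambda>\<omega>. ((X k1 \<omega>, X k2 \<omega>), (X k3 \<omega>, X k4 \<omega>))" P4 "\<lambda>\<omega>. ((X k5 \<omega>, X k6 \<omega>), (X k7 \<omega>, X k8 \<omega>))"] by simp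
  qed
  have "(\<integral>\<^sup>+\<omega>. F (((X k1 \<omega>, X k2 \<omega>), (X k3 \<omega>, X k4 \<omega>)), ((X k5 \<omega>, X k6 \<omega>), (X k7 \<omega>, X k8 \<omega>))) \<partial>M)
     = (\<integral>\<^sup>+p. F p \<partial>distr M (P4 \<Otimes>\<^sub>M P4) (\<lambda>\<omega>. (((X k1 \<omega>, X k2 \<omega>), (X k3 \<omega>, X k4 \<omega>)), ((X k5 \<omega>, X k6 \<omega>), (X k7 \<omega>, X k8 \<omega>)))))"
    by (rule nn_integral_distr[symmetric]) (auto simp: P4_def P2_def)
  also have "\<dots> = (\<integral>\<^sup>+p. F p \<partial>(P4 \<Otimes>\<^sub>M P4))" unfolding oct ..
  also have "\<dots> = (\<integral>\<^sup>+x1. \<integral>\<^sup>+x2. \<integral>\<^sup>+x3. \<integral>\<^sup>+x4. \<integral>\<^sup>+x5. \<integral>\<^sup>+x6. \<integral>\<^sup>+x7. \<integral>\<^sup>+x8. F (((x1, x2), (x3, x4)), ((x5, x6), (x7, x8))) \<partial>G \<partial>G \<partial>G \<partial>G \<partial>G \<partial>G \<partial>G \<partial>G)"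
    unfolding P4_def P2_def by (rule int_G8) measurable
  finally show ?thesis .
qed

end


definition gR :: "real \<Rightarrow> real \<Rightarrow> real \<Rightarrow> real \<Rightarrow> real \<Rightarrow> real \<Rightarrow> real \<Rightarrow> real \<Rightarrow> real \<Rightarrow> real" where
  "gR \<rho> c1 d1 c2 d2 a1 b1 a2 b2 =
    ((a1*(c1 + \<rho>*c2) + b1*(d1 + \<rho>*d2) + a2*(\<rho>*c1 + c2) + b2*(\<rho>*d1 + d2))\<^sup>2 +
     (a1*(d1 + \<rho>*d2) - b1*(c1 + \<rho>*c2) + a2*(\<rho>*d1 + d2) - b2*(\<rho>*c1 + c2))\<^sup>2)
    / (c1\<^sup>2 + d1\<^sup>2 + c2\<^sup>2 + d2\<^sup>2 + 2*\<rho>*(c1*c2 + d1*d2))"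

lemma norm_sq_c2: "(norm (v :: complex^2))\<^sup>2 = (cmod (v$1))\<^sup>2 + (cmod (v$2))\<^sup>2"
  by (simp add: norm_vec_def L2_set_def sum_2)

lemma g_alg:
  assumes r: "0 < \<rho>" "\<rho> < 1"
  shows "(cmod (herm_inner (cmat (S0 \<rho>) *v x) (cmat (S0 \<rho>) *v y)))\<^sup>2 / (norm (cmat (S0 \<rho>) *v y))\<^sup>2
    = gR \<rho> (Re (y$1)) (Im (y$1)) (Re (y$2)) (Im (y$2)) (Re (x$1)) (Im (x$1)) (Re (x$2)) (Im (x$2))"
proof -
  define p where "p = (sqrt (1+\<rho>) + sqrt (1-\<rho>))/2"
  define q where "q = (sqrt (1+\<rho>) - sqrt (1-\<rho>))/2"
  have S0e: "S0 \<rho> $ i $ j = (if i = j then p else q)" for i j unfolding S0_def p_def q_def by simp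
  have sa: "sqrt (1+\<rho>) * sqrt (1+\<rho>) = 1+\<rho>" "sqrt (1-\<rho>) * sqrt (1-\<rho>) = 1-\<rho>" using r by simp_all
  have pq1: "p*p + q*q = 1" unfolding p_def q_def using sa by (simp add: field_simps power2_eq_square)
  have pq2: "p*q + q*p = \<rho>" unfolding p_def q_def using sa by (simp add: field_simps power2_eq_square)
  define a1 where "a1 = Re (x$1)" define b1 where "b1 = Im (x$1)"
  define a2 where "a2 = Re (x$2)" define b2 where "b2 = Im (x$2)"
  define c1 where "c1 = Re (y$1)" define d1 where "d1 = Im (y$1)"
  define c2 where "c2 = Re (y$2)" define d2 where "d2 = Im (y$2)"
  have Sx1: "(cmat (S0 \<rho>) *v x) $ 1 = Complex (p*a1 + q*a2) (p*b1 + q*b2)"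
    by (simp add: matrix_vector_mult_def cmat_def sum_2 S0e complex_eq_iff a1_def a2_def b1_def b2_def)
  have Sx2: "(cmat (S0 \<rho>) *v x) $ 2 = Complex (q*a1 + p*a2) (q*b1 + p*b2)"
    by (simp add: matrix_vector_mult_def cmat_def sum_2 S0e complex_eq_iff a1_def a2_def b1_def b2_def)
  have Sy1: "(cmat (S0 \<rho>) *v y) $ 1 = Complex (p*c1 + q*c2) (p*d1 + q*d2)"
    by (simp add: matrix_vector_mult_def cmat_def sum_2 S0e complex_eq_iff c1_def c2_def d1_def d2_def)
  have Sy2: "(cmat (S0 \<rho>) *v y) $ 2 = Complex (q*c1 + p*c2) (q*d1 + p*d2)"
    by (simp add: matrix_vector_mult_def cmat_def sum_2 S0e complex_eq_iff c1_def c2_def d1_def d2_def)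
  have H: "herm_inner (cmat (S0 \<rho>) *v x) (cmat (S0 \<rho>) *v y) =
    Complex ((p*a1 + q*a2)*(p*c1 + q*c2) + (p*b1 + q*b2)*(p*d1 + q*d2) + (q*a1 + p*a2)*(q*c1 + p*c2) + (q*b1 + p*b2)*(q*d1 + p*d2))
            ((p*a1 + q*a2)*(p*d1 + q*d2) - (p*b1 + q*b2)*(p*c1 + q*c2) + (q*a1 + p*a2)*(q*d1 + p*d2) - (q*b1 + p*b2)*(q*c1 + p*c2))"
    unfolding herm_inner_def sum_2 Sx1 Sx2 Sy1 Sy2 by (simp add: complex_eq_iff algebra_simps)
  have ReZ: "(p*a1 + q*a2)*(p*c1 + q*c2) + (p*b1 + q*b2)*(p*d1 + q*d2) + (q*a1 + p*a2)*(q*c1 + p*c2) + (q*b1 + p*b2)*(q*d1 + p*d2)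
      = a1*((p*p + q*q)*c1 + (p*q + q*p)*c2) + b1*((p*p + q*q)*d1 + (p*q + q*p)*d2) + a2*((p*q + q*p)*c1 + (p*p + q*q)*c2) + b2*((p*q + q*p)*d1 + (p*p + q*q)*d2)"
    by (simp add: algebra_simps)
  have ImZ: "(p*a1 + q*a2)*(p*d1 + q*d2) - (p*b1 + q*b2)*(p*c1 + q*c2) + (q*a1 + p*a2)*(q*d1 + p*d2) - (q*b1 + p*b2)*(q*c1 + p*c2)
      = a1*((p*p + q*q)*d1 + (p*q + q*p)*d2) - b1*((p*p + q*q)*c1 + (p*q + q*p)*c2) + a2*((p*q + q*p)*d1 + (p*p + q*q)*d2) - b2*((p*q + q*p)*c1 + (p*p + q*q)*c2)"
    by (simp add: algebra_simps)
  have Dn: "(norm (cmat (S0 \<rho>) *v y))\<^sup>2 = (p*p + q*q)*(c1\<^sup>2 + d1\<^sup>2 + c2\<^sup>2 + d2\<^sup>2) + 2*(p*q + q*p)*(c1*c2 + d1*d2)"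
    unfolding norm_sq_c2 Sy1 Sy2 cmod_power2 by (simp add: power2_eq_square algebra_simps)
  show ?thesis
    unfolding H cmod_power2 complex.sel ReZ ImZ Dn pq1 pq2 gR_def
    unfolding a1_def a2_def b1_def b2_def c1_def c2_def d1_def d2_def by simp
qed


lemma gamma_lem:
  assumes s: "s > 0" and c: "c \<ge> 0"
  shows "(\<integral>\<^sup>+t. ennreal (exp (-t)) * ennreal ((c * t) powr s) * indicator {0..} t \<partial>lborel) = ennreal (Gamma (s + 1) * c powr s)"
proof -
  have "(\<integral>\<^sup>+t. ennreal (exp (-t)) * ennreal ((c * t) powr s) * indicator {0..} t \<partial>lborel)
      = (\<integral>\<^sup>+t. ennreal (c powr s) * ennreal (indicator {0..} t * t powr (s + 1 - 1) / exp t) \<partial>lborel)"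
  proof (rule nn_integral_cong)
    fix t :: real
    show "ennreal (exp (-t)) * ennreal ((c * t) powr s) * indicator {0..} t = ennreal (c powr s) * ennreal (indicator {0..} t * t powr (s + 1 - 1) / exp t)"
    proof (cases "t \<ge> 0")
      case True
      have "exp (-t) * (c * t) powr s = c powr s * (t powr s / exp t)"
        using True c by (simp add: powr_mult exp_minus field_simps)
      then show ?thesis using True by (simp add: ennreal_mult[symmetric])
    qed simp
  qed
  also have "\<dots> = ennreal (c powr s) * (\<integral>\<^sup>+t. ennreal (indicator {0..} t * t powr (s + 1 - 1) / exp t) \<partial>lborel)"
    by (rule nn_integral_cmult) measurable
  also have "(\<integral>\<^sup>+t. ennreal (indicator {0..} t * t powr (s + 1 - 1) / exp t) \<partial>lborel) = ennreal (Gamma (s + 1))"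
    using Gamma_conv_nn_integral_real[of "s + 1"] s by simp
  finally show ?thesis using s by (simp add: ennreal_mult[symmetric] mult.commute)
qed

lemma Dn_nonneg:
  fixes \<rho> c1 d1 c2 d2 :: real
  assumes r: "0 < \<rho>" "\<rho> < 1"
  shows "0 \<le> c1\<^sup>2 + d1\<^sup>2 + c2\<^sup>2 + d2\<^sup>2 + 2*\<rho>*(c1*c2 + d1*d2)"
proof -
  have "c1\<^sup>2 + d1\<^sup>2 + c2\<^sup>2 + d2\<^sup>2 + 2*\<rho>*(c1*c2 + d1*d2) = (1 - \<rho>) * (c1\<^sup>2 + d1\<^sup>2 + c2\<^sup>2 + d2\<^sup>2) + \<rho> * ((c1 + c2)\<^sup>2 + (d1 + d2)\<^sup>2)"
    by (simp add: power2_eq_square algebra_simps)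
  also have "\<dots> \<ge> 0" using r by (intro add_nonneg_nonneg mult_nonneg_nonneg) auto
  finally show ?thesis .
qed

lemma inner_lem:
  assumes r: "0 < \<rho>" "\<rho> < 1" and s: "s > 0"
  shows "(\<integral>\<^sup>+a1. \<integral>\<^sup>+b1. \<integral>\<^sup>+a2. \<integral>\<^sup>+b2. ennreal (gR \<rho> c1 d1 c2 d2 a1 b1 a2 b2 powr s) \<partial>G \<partial>G \<partial>G \<partial>G)
    = ennreal (Gamma (s + 1) * (((c1 + \<rho>*c2)\<^sup>2 + (d1 + \<rho>*d2)\<^sup>2 + (\<rho>*c1 + c2)\<^sup>2 + (\<rho>*d1 + d2)\<^sup>2)
        / (c1\<^sup>2 + d1\<^sup>2 + c2\<^sup>2 + d2\<^sup>2 + 2*\<rho>*(c1*c2 + d1*d2))) powr s)"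
proof -
  define Dn where "Dn = c1\<^sup>2 + d1\<^sup>2 + c2\<^sup>2 + d2\<^sup>2 + 2*\<rho>*(c1*c2 + d1*d2)"
  define Wn where "Wn = (c1 + \<rho>*c2)\<^sup>2 + (d1 + \<rho>*d2)\<^sup>2 + (\<rho>*c1 + c2)\<^sup>2 + (\<rho>*d1 + d2)\<^sup>2"
  have D0: "Dn \<ge> 0" unfolding Dn_def using Dn_nonneg[OF r] .
  have W0: "Wn \<ge> 0" unfolding Wn_def by simp
  define \<Phi> where "\<Phi> = (\<lambda>t. ennreal ((t / Dn) powr s))"
  have [measurable]: "\<Phi> \<in> borel_measurable borel" unfolding \<Phi>_def by measurable
  have "(\<integral>\<^sup>+a1. \<integral>\<^sup>+b1. \<integral>\<^sup>+a2. \<integral>\<^sup>+b2. ennreal (gR \<rho> c1 d1 c2 d2 a1 b1 a2 b2 powr s) \<partial>G \<partial>G \<partial>G \<partial>G)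
     = (\<integral>\<^sup>+a1. \<integral>\<^sup>+b1. \<integral>\<^sup>+a2. \<integral>\<^sup>+b2. \<Phi> ((a1*(c1 + \<rho>*c2) + b1*(d1 + \<rho>*d2) + a2*(\<rho>*c1 + c2) + b2*(\<rho>*d1 + d2))\<^sup>2 +
     (a1*(d1 + \<rho>*d2) - b1*(c1 + \<rho>*c2) + a2*(\<rho>*d1 + d2) - b2*(\<rho>*c1 + c2))\<^sup>2) \<partial>G \<partial>G \<partial>G \<partial>G)"
    unfolding gR_def \<Phi>_def Dn_def ..
  also have "\<dots> = (\<integral>\<^sup>+t. ennreal (exp (-t)) * \<Phi> (Wn * t) * indicator {0..} t \<partial>lborel)"
    unfolding Wn_def by (rule L1core) measurable
  also have "\<dots> = (\<integral>\<^sup>+t. ennreal (exp (-t)) * ennreal ((Wn / Dn * t) powr s) * indicator {0..} t \<partial>lborel)"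
    unfolding \<Phi>_def by (simp add: mult.commute)
  also have "\<dots> = ennreal (Gamma (s + 1) * (Wn / Dn) powr s)"
    by (rule gamma_lem[OF s]) (use D0 W0 in simp)
  finally show ?thesis unfolding Wn_def Dn_def .
qed

lemma outer_lem:
  assumes r: "0 < \<rho>" "\<rho> < 1" and s: "s > 0"
  shows "(\<integral>\<^sup>+c1. \<integral>\<^sup>+d1. \<integral>\<^sup>+c2. \<integral>\<^sup>+d2. ennreal (Gamma (s + 1) * (((c1 + \<rho>*c2)\<^sup>2 + (d1 + \<rho>*d2)\<^sup>2 + (\<rho>*c1 + c2)\<^sup>2 + (\<rho>*d1 + d2)\<^sup>2)
        / (c1\<^sup>2 + d1\<^sup>2 + c2\<^sup>2 + d2\<^sup>2 + 2*\<rho>*(c1*c2 + d1*d2))) powr s) \<partial>G \<partial>G \<partial>G \<partial>G)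
    = ennreal (Gamma (s + 1)) * (\<integral>\<^sup>+z. ennreal ((((1 + \<rho>)\<^sup>2 * z + (1 - \<rho>)\<^sup>2) / ((1 + \<rho>) * z + (1 - \<rho>))) powr s) * ennreal (1 / (1 + z)\<^sup>2) * indicator {0..} z \<partial>lborel)"
proof -
  define \<Xi> where "\<Xi> = (\<lambda>x y. ennreal (Gamma (s + 1) * (((1 + \<rho>\<^sup>2) * x + 4 * \<rho> * y) / (x + 2 * \<rho> * y)) powr s))"
  have Xm: "(\<lambda>(x, y). \<Xi> x y) \<in> borel_measurable (borel \<Otimes>\<^sub>M borel)" unfolding \<Xi>_def by measurable
  define \<Theta> where "\<Theta> = (\<lambda>t u. \<Xi> (t + u) ((t - u) / 2))"
  have Tm: "(\<lambda>(x, y). \<Theta> x y) \<in> borel_measurable (borel \<Otimes>\<^sub>M borel)" unfolding \<Theta>_def \<Xi>_def by measurable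
  define N where "N = (\<lambda>z::real. (1 + \<rho>)\<^sup>2 * z + (1 - \<rho>)\<^sup>2)"
  define D where "D = (\<lambda>z::real. (1 + \<rho>) * z + (1 - \<rho>))"
  have Tz: "\<Theta> (u * z) u = ennreal (Gamma (s + 1) * (N z / D z) powr s)" if u: "u > 0" for u z
  proof -
    have h4: "4 * \<rho> * ((u * z - u) / 2) = 2 * \<rho> * (u * z - u)" by simp
    have h2: "2 * \<rho> * ((u * z - u) / 2) = \<rho> * (u * z - u)" by simp
    have 1: "(1 + \<rho>\<^sup>2) * (u * z + u) + 4 * \<rho> * ((u * z - u) / 2) = u * N z"
      unfolding N_def h4 by (simp add: power2_eq_square algebra_simps)
    have 2: "u * z + u + 2 * \<rho> * ((u * z - u) / 2) = u * D z"
      unfolding D_def h2 by (simp add: algebra_simps)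
    show ?thesis unfolding \<Theta>_def \<Xi>_def 1 2 using u by simp
  qed
  have T1: "\<Theta> z 1 = ennreal (Gamma (s + 1) * (N z / D z) powr s)" for z
    using Tz[of 1 z] by simp
  have "(\<integral>\<^sup>+c1. \<integral>\<^sup>+d1. \<integral>\<^sup>+c2. \<integral>\<^sup>+d2. ennreal (Gamma (s + 1) * (((c1 + \<rho>*c2)\<^sup>2 + (d1 + \<rho>*d2)\<^sup>2 + (\<rho>*c1 + c2)\<^sup>2 + (\<rho>*d1 + d2)\<^sup>2)
        / (c1\<^sup>2 + d1\<^sup>2 + c2\<^sup>2 + d2\<^sup>2 + 2*\<rho>*(c1*c2 + d1*d2))) powr s) \<partial>G \<partial>G \<partial>G \<partial>G)
     = (\<integral>\<^sup>+c1. \<integral>\<^sup>+d1. \<integral>\<^sup>+c2. \<integral>\<^sup>+d2. \<Xi> (c1\<^sup>2 + d1\<^sup>2 + c2\<^sup>2 + d2\<^sup>2) (c1*c2 + d1*d2) \<partial>G \<partial>G \<partial>G \<partial>G)"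
  proof -
    have "(c1 + \<rho>*c2)\<^sup>2 + (d1 + \<rho>*d2)\<^sup>2 + (\<rho>*c1 + c2)\<^sup>2 + (\<rho>*d1 + d2)\<^sup>2 = (1 + \<rho>\<^sup>2) * (c1\<^sup>2 + d1\<^sup>2 + c2\<^sup>2 + d2\<^sup>2) + 4 * \<rho> * (c1*c2 + d1*d2)"
      for c1 d1 c2 d2 :: real by (simp add: power2_eq_square algebra_simps)
    then show ?thesis unfolding \<Xi>_def by simp
  qed
  also have "\<dots> = (\<integral>\<^sup>+t. ennreal (exp (-t)) * (\<integral>\<^sup>+u. ennreal (exp (-u)) * \<Theta> t u * indicator {0..} u \<partial>lborel) * indicator {0..} t \<partial>lborel)"
    unfolding \<Theta>_def by (rule L2core[OF Xm])
  also have "\<dots> = (\<integral>\<^sup>+z. \<Theta> z 1 * ennreal (1 / (1 + z)\<^sup>2) * indicator {0..} z \<partial>lborel)"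
    by (rule L3[OF Tm]) (simp add: Tz T1)
  also have "\<dots> = (\<integral>\<^sup>+z. ennreal (Gamma (s + 1)) * (ennreal ((N z / D z) powr s) * ennreal (1 / (1 + z)\<^sup>2) * indicator {0..} z) \<partial>lborel)"
    unfolding T1 using s by (intro nn_integral_cong) (simp add: ennreal_mult mult.assoc)
  also have "\<dots> = ennreal (Gamma (s + 1)) * (\<integral>\<^sup>+z. ennreal ((N z / D z) powr s) * ennreal (1 / (1 + z)\<^sup>2) * indicator {0..} z \<partial>lborel)"
    by (rule nn_integral_cmult) (unfold N_def D_def, measurable)
  finally show ?thesis unfolding N_def D_def .
qed

lemma Kf_mono:
  assumes s: "s > 0" and ab: "0 < a" "a \<le> b" "b < 1"
  shows "Kf s a \<le> Kf s b"
proof (rule sums_le[OF _ Kf_sums(1)[OF s, of a] Kf_sums(1)[OF s, of b]])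
  fix n
  have "a powr (real n + s + 1) \<le> b powr (real n + s + 1)" by (rule powr_mono2) (use ab s in auto)
  then show "(real n + 1) * a powr (real n + s + 1) / (real n + s + 1) \<le> (real n + 1) * b powr (real n + s + 1) / (real n + s + 1)"
    using s by (intro divide_right_mono mult_left_mono) auto
qed (use ab in auto)

theorem corollary1:
  fixes M :: "'a measure" and h1 h2 :: "'a \<Rightarrow> complex^2" and \<alpha> \<rho> :: real
  assumes "prob_space M"
    and "\<alpha> > 2" and "0 < \<rho>" and "\<rho> < 1"
    and "prob_space.indep_vars M (\<lambda>_. borel) (coord h1 h2) UNIV"
    and "\<And>k. distributed M lborel (coord h1 h2 k) (normal_density 0 (sqrt (1/2)))"
  shows "let S = cmat (psd_sqrt (Rmat \<rho>));
             g = (\<lambda>\<omega>. (cmod (herm_inner (S *v h1 \<omega>) (S *v h2 \<omega>)))\<^sup>2 / (norm (S *v h2 \<omega>))\<^sup>2)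
         in integrable M (\<lambda>\<omega>. g \<omega> powr (2/\<alpha>)) \<and>
            prob_space.expectation M (\<lambda>\<omega>. g \<omega> powr (2/\<alpha>))
              = (1 - \<rho>\<^sup>2) / (2 * \<rho>) * (G_fun (1 + \<rho>) \<alpha> - G_fun (1 - \<rho>) \<alpha>)"
proof -
  interpret P: prob_space M by fact
  have r: "0 < \<rho>" "\<rho> < 1" using assms(3,4) .
  define s where "s = 2 / \<alpha>"
  have s0: "s > 0" using assms(2) by (simp add: s_def)
  define X where "X = coord h1 h2"
  have ind: "P.indep_vars (\<lambda>_. borel) X UNIV" using assms(5) unfolding X_def .
  have dG: "distr M G (X k) = G" for k
  proof -
    have "distributed M lborel (X k) (normal_density 0 (sqrt (1/2)))" using assms(6) unfolding X_def .
    then have "distr M lborel (X k) = G" unfolding distributed_def G_def gd_normal by simp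
    moreover have "distr M G (X k) = distr M lborel (X k)" by (rule distr_cong) auto
    ultimately show ?thesis by simp
  qed
  have Xm[measurable]: "X k \<in> borel_measurable M" for k
    using ind unfolding P.indep_vars_def by blast
  define k1 where "k1 = (False, 1::2, True)"
  define k2 where "k2 = (False, 1::2, False)"
  define k3 where "k3 = (False, 2::2, True)"
  define k4 where "k4 = (False, 2::2, False)"
  define k5 where "k5 = (True, 1::2, True)"
  define k6 where "k6 = (True, 1::2, False)"
  define k7 where "k7 = (True, 2::2, True)"
  define k8 where "k8 = (True, 2::2, False)"
  have dist: "distinct [k1, k2, k3, k4, k5, k6, k7, k8]"
    unfolding k1_def k2_def k3_def k4_def k5_def k6_def k7_def k8_def by simp
  define gg where "gg = (\<lambda>\<omega>. gR \<rho> (X k1 \<omega>) (X k2 \<omega>) (X k3 \<omega>) (X k4 \<omega>) (X k5 \<omega>) (X k6 \<omega>) (X k7 \<omega>) (X k8 \<omega>))"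
  have gform: "(cmod (herm_inner (cmat (psd_sqrt (Rmat \<rho>)) *v h1 \<omega>) (cmat (psd_sqrt (Rmat \<rho>)) *v h2 \<omega>)))\<^sup>2 / (norm (cmat (psd_sqrt (Rmat \<rho>)) *v h2 \<omega>))\<^sup>2 = gg \<omega>" for \<omega>
    unfolding psd_sqrt_R[OF r] g_alg[OF r] gg_def X_def coord_def
      k1_def k2_def k3_def k4_def k5_def k6_def k7_def k8_def by simp
  define F where "F = (\<lambda>p. ennreal (gR \<rho> (fst (fst (fst p))) (snd (fst (fst p))) (fst (snd (fst p))) (snd (snd (fst p)))
     (fst (fst (snd p))) (snd (fst (snd p))) (fst (snd (snd p))) (snd (snd (snd p))) powr s))"
  have Fm: "F \<in> borel_measurable (((G \<Otimes>\<^sub>M G) \<Otimes>\<^sub>M (G \<Otimes>\<^sub>M G)) \<Otimes>\<^sub>M ((G \<Otimes>\<^sub>M G) \<Otimes>\<^sub>M (G \<Otimes>\<^sub>M G)))"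
    unfolding F_def gR_def by measurable
  define l1 where "l1 = 1 + \<rho>"
  define l2 where "l2 = 1 - \<rho>"
  have "(\<integral>\<^sup>+\<omega>. ennreal (gg \<omega> powr s) \<partial>M)
      = (\<integral>\<^sup>+\<omega>. F (((X k1 \<omega>, X k2 \<omega>), (X k3 \<omega>, X k4 \<omega>)), ((X k5 \<omega>, X k6 \<omega>), (X k7 \<omega>, X k8 \<omega>))) \<partial>M)"
    unfolding F_def gg_def by simp
  also have "\<dots> = (\<integral>\<^sup>+x1. \<integral>\<^sup>+x2. \<integral>\<^sup>+x3. \<integral>\<^sup>+x4. \<integral>\<^sup>+x5. \<integral>\<^sup>+x6. \<integral>\<^sup>+x7. \<integral>\<^sup>+x8. F (((x1, x2), (x3, x4)), ((x5, x6), (x7, x8))) \<partial>G \<partial>G \<partial>G \<partial>G \<partial>G \<partial>G \<partial>G \<partial>G)"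
    by (rule P.bridge8[OF ind dG dist Fm])
  also have "\<dots> = (\<integral>\<^sup>+c1. \<integral>\<^sup>+d1. \<integral>\<^sup>+c2. \<integral>\<^sup>+d2. ennreal (Gamma (s + 1) * (((c1 + \<rho>*c2)\<^sup>2 + (d1 + \<rho>*d2)\<^sup>2 + (\<rho>*c1 + c2)\<^sup>2 + (\<rho>*d1 + d2)\<^sup>2)
        / (c1\<^sup>2 + d1\<^sup>2 + c2\<^sup>2 + d2\<^sup>2 + 2*\<rho>*(c1*c2 + d1*d2))) powr s) \<partial>G \<partial>G \<partial>G \<partial>G)"
    unfolding F_def by (simp add: inner_lem[OF r s0])
  also have "\<dots> = ennreal (Gamma (s + 1)) * (\<integral>\<^sup>+z. ennreal (((l1\<^sup>2 * z + l2\<^sup>2) / (l1 * z + l2)) powr s) * ennreal (1 / (1 + z)\<^sup>2) * indicator {0..} z \<partial>lborel)"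
    unfolding l1_def l2_def by (rule outer_lem[OF r s0])
  also have "\<dots> = ennreal (Gamma (s + 1)) * (ennreal ((1 - \<rho>\<^sup>2) / (4 * \<rho>) * 2 powr s) * (\<integral>\<^sup>+y. ennreal (y powr s / (1 - y)\<^sup>2) * indicator {l2/2..l1/2} y \<partial>lborel))"
    unfolding l1_def l2_def by (subst subst_z[OF r s0]) simp
  also have "(\<integral>\<^sup>+y. ennreal (y powr s / (1 - y)\<^sup>2) * indicator {l2/2..l1/2} y \<partial>lborel) = ennreal (Kf s (l1/2) - Kf s (l2/2))"
    by (rule int_ys[OF s0]) (use r in \<open>auto simp: l1_def l2_def\<close>)
  finally have nn: "(\<integral>\<^sup>+\<omega>. ennreal (gg \<omega> powr s) \<partial>M) = ennreal (Gamma (s + 1) * ((1 - \<rho>\<^sup>2) / (4 * \<rho>) * 2 powr s * (Kf s (l1/2) - Kf s (l2/2))))"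
  proof -
    assume e: "(\<integral>\<^sup>+\<omega>. ennreal (gg \<omega> powr s) \<partial>M) = ennreal (Gamma (s + 1)) * (ennreal ((1 - \<rho>\<^sup>2) / (4 * \<rho>) * 2 powr s) * ennreal (Kf s (l1/2) - Kf s (l2/2)))"
    have g0: "Gamma (s + 1) \<ge> 0" using s0 by (simp add: Gamma_real_pos less_imp_le)
    have "\<rho> * \<rho> < 1 * 1" using r by (intro mult_strict_mono) auto
    then have c0: "(1 - \<rho>\<^sup>2) / (4 * \<rho>) * 2 powr s \<ge> 0" using r by (simp add: power2_eq_square)
    have k0: "Kf s (l1/2) - Kf s (l2/2) \<ge> 0" using Kf_mono[OF s0, of "l2/2" "l1/2"] r unfolding l1_def l2_def by simp
    have m1: "ennreal ((1 - \<rho>\<^sup>2) / (4 * \<rho>) * 2 powr s) * ennreal (Kf s (l1/2) - Kf s (l2/2)) = ennreal ((1 - \<rho>\<^sup>2) / (4 * \<rho>) * 2 powr s * (Kf s (l1/2) - Kf s (l2/2)))"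
      by (rule ennreal_mult[symmetric, OF c0 k0])
    have m2: "ennreal (Gamma (s + 1)) * ennreal ((1 - \<rho>\<^sup>2) / (4 * \<rho>) * 2 powr s * (Kf s (l1/2) - Kf s (l2/2))) = ennreal (Gamma (s + 1) * ((1 - \<rho>\<^sup>2) / (4 * \<rho>) * 2 powr s * (Kf s (l1/2) - Kf s (l2/2))))"
      by (rule ennreal_mult[symmetric, OF g0 mult_nonneg_nonneg[OF c0 k0]])
    show ?thesis unfolding e m1 m2 ..
  qed
  define V where "V = (1 - \<rho>\<^sup>2) / (2 * \<rho>) * (G_fun (1 + \<rho>) \<alpha> - G_fun (1 - \<rho>) \<alpha>)"
  have V: "V = Gamma (s + 1) * ((1 - \<rho>\<^sup>2) / (4 * \<rho>) * 2 powr s * (Kf s (l1/2) - Kf s (l2/2)))"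
  proof -
    have a0: "\<alpha> > 0" using assms(2) by simp
    have e1: "2 * (l1/2) = l1" "2 * (l2/2) = l2" by simp_all
    have "G_fun (2 * (l1/2)) \<alpha> = Gamma (2/\<alpha> + 1) * 2 powr (2/\<alpha> - 1) * Kf (2/\<alpha>) (l1/2)"
      by (rule G_fun_Kf[OF a0]) (use r in \<open>auto simp: l1_def\<close>)
    then have G1: "G_fun (1 + \<rho>) \<alpha> = Gamma (s + 1) * 2 powr (s - 1) * Kf s (l1/2)"
      unfolding e1 unfolding l1_def s_def .
    have "G_fun (2 * (l2/2)) \<alpha> = Gamma (2/\<alpha> + 1) * 2 powr (2/\<alpha> - 1) * Kf (2/\<alpha>) (l2/2)"
      by (rule G_fun_Kf[OF a0]) (use r in \<open>auto simp: l2_def\<close>)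
    then have G2: "G_fun (1 - \<rho>) \<alpha> = Gamma (s + 1) * 2 powr (s - 1) * Kf s (l2/2)"
      unfolding e1 unfolding l2_def s_def .
    have p: "2 powr s = 2 * 2 powr (s - 1)" using powr_add[of 2 1 "s - 1"] by simp
    show ?thesis unfolding V_def G1 G2 p using r by (simp add: field_simps)
  qed
  have V0: "V \<ge> 0"
  proof -
    have "\<rho> * \<rho> < 1 * 1" using r by (intro mult_strict_mono) auto
    moreover have "Kf s (l1/2) - Kf s (l2/2) \<ge> 0" using Kf_mono[OF s0, of "l2/2" "l1/2"] r unfolding l1_def l2_def by simp
    moreover have "Gamma (s + 1) \<ge> 0" using s0 by (simp add: Gamma_real_pos less_imp_le)
    ultimately show ?thesis unfolding V using r by (simp add: power2_eq_square)
  qed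
  have hb: "has_bochner_integral M (\<lambda>\<omega>. gg \<omega> powr s) V"
  proof (rule has_bochner_integral_nn_integral)
    show "(\<lambda>\<omega>. gg \<omega> powr s) \<in> borel_measurable M" unfolding gg_def gR_def by measurable
    show "AE x in M. 0 \<le> gg x powr s" by simp
    show "(\<integral>\<^sup>+\<omega>. ennreal (gg \<omega> powr s) \<partial>M) = ennreal V" unfolding nn V ..
  qed (rule V0)
  have gfun: "(\<lambda>\<omega>. ((cmod (herm_inner (cmat (psd_sqrt (Rmat \<rho>)) *v h1 \<omega>) (cmat (psd_sqrt (Rmat \<rho>)) *v h2 \<omega>)))\<^sup>2 / (norm (cmat (psd_sqrt (Rmat \<rho>)) *v h2 \<omega>))\<^sup>2) powr (2/\<alpha>)) = (\<lambda>\<omega>. gg \<omega> powr s)"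
    unfolding gform s_def ..
  show ?thesis
    unfolding Let_def gfun V_def[symmetric]
    using hb by (auto simp: has_bochner_integral_iff)
qed


end
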